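(* For integers $n \geq k \geq 2$ and $i \geq 2$, $$f_{(n,k,2),i}(q) = q^{k+i^2-3i+6} \frac{(1-q^{n-k+1})(1-q^{k-1})(1-q^n)}{(1-q^{i-1})(1-q)(1-q^2)} \begin{bmatrix} n+1 \\ i-2 \end{bmatrix}_q \begin{bmatrix} k \\ i-2 \end{bmatrix}_q.$$
   Context: For a partition $\lambda\vdash N$, a standard Young tableau of shape $\lambda$ is a filling of the Ferrers diagram (row $r$ has $\lambda_r$ left-justified boxes, rows top to bottom) with $1,\dots,N$, increasing along rows and down columns. It has a descent at $m$ if $m+1$ lies in a strictly lower row than $m$; $\mathrm{des}$ is the number of descents and $\mathrm{maj}$ their sum. $f_{\lambda,i}(q)=\sum q^{\mathrm{maj}(\tau)}$ over standard Young tableaux $\tau$ of shape $\lambda$ with $\mathrm{des}(\tau)=i$. The $q$-binomial coefficient is $\begin{bmatrix} M \\ N \end{bmatrix}_q = \frac{(q)_M}{(q)_N(q)_{M-N}}$ with $(q)_m=(1-q)\cdots(1-q^m)$ when $0\le N\le M$ are integers, and $0$ otherwise. *)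

theory Defs
  imports Complex_Main
begin

text \<open>Ferrers diagram of a partition given as a list of row lengths (row 0 on top).
  Cells are pairs (row, column), 0-indexed.\<close>
definition cells :: "nat list \<Rightarrow> (nat \<times> nat) set" where
  "cells lam = {(r, c). r < length lam \<and> c < lam ! r}"

definition SYT :: "nat list \<Rightarrow> (nat \<times> nat \<Rightarrow> nat) set" where
  "SYT lam = {T. bij_betw T (cells lam) {1..sum_list lam}
      \<and> (\<forall>x. x \<notin> cells lam \<longrightarrow> T x = 0)
      \<and> (\<forall>r c. (r, Suc c) \<in> cells lam \<longrightarrow> T (r, c) < T (r, Suc c))
      \<and> (\<forall>r c. (Suc r, c) \<in> cells lam \<longrightarrow> T (r, c) < T (Suc r, c))}"

definition row_of :: "nat list \<Rightarrow> (nat \<times> nat \<Rightarrow> nat) \<Rightarrow> nat \<Rightarrow> nat" where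
  "row_of lam T m = fst (the_inv_into (cells lam) T m)"

definition descents :: "nat list \<Rightarrow> (nat \<times> nat \<Rightarrow> nat) \<Rightarrow> nat set" where
  "descents lam T = {m. 1 \<le> m \<and> m < sum_list lam \<and> row_of lam T m < row_of lam T (Suc m)}"

definition des :: "nat list \<Rightarrow> (nat \<times> nat \<Rightarrow> nat) \<Rightarrow> nat" where
  "des lam T = card (descents lam T)"

definition maj :: "nat list \<Rightarrow> (nat \<times> nat \<Rightarrow> nat) \<Rightarrow> nat" where
  "maj lam T = \<Sum> (descents lam T)"

definition fpoly :: "nat list \<Rightarrow> nat \<Rightarrow> 'a::comm_ring_1 \<Rightarrow> 'a" where
  "fpoly lam i q = (\<Sum>T\<in>{T \<in> SYT lam. des lam T = i}. q ^ maj lam T)"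

definition qpoch :: "'a::comm_ring_1 \<Rightarrow> nat \<Rightarrow> 'a" where
  "qpoch q m = (\<Prod>j=1..m. 1 - q ^ j)"

definition qbinom :: "int \<Rightarrow> int \<Rightarrow> 'a::field \<Rightarrow> 'a" where
  "qbinom M N q = (if 0 \<le> N \<and> N \<le> M
     then qpoch q (nat M) / (qpoch q (nat N) * qpoch q (nat (M - N))) else 0)"

end

theory Submission
  imports Defs
begin


lemma cells_Sigma: "cells lam = (SIGMA r:{..<length lam}. {..<lam!r})"
  by (auto simp: cells_def)

lemma finite_cells[simp]: "finite (cells lam)"
  by (simp add: cells_Sigma)

lemma SYT_finite: "finite (SYT lam)"
proof -
  have "SYT lam \<subseteq> {f. \<forall>x. (x \<in> cells lam \<longrightarrow> f x \<in> {0..sum_list lam}) \<and> (x \<notin> cells lam \<longrightarrow> f x = 0)}"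
    by (auto simp: SYT_def bij_betw_def)
  thus ?thesis using finite_set_of_finite_funs[of "cells lam" "{0..sum_list lam}" 0]
    by (auto intro: finite_subset)
qed

definition valid :: "nat list \<Rightarrow> nat \<Rightarrow> bool" where
  "valid lam r \<longleftrightarrow> r < length lam \<and> 0 < lam!r \<and> (Suc r < length lam \<longrightarrow> lam!(Suc r) < lam!r)"

definition dec :: "nat list \<Rightarrow> nat \<Rightarrow> nat list" where
  "dec lam r = lam[r := lam!r - 1]"

lemma sum_dec: "valid lam r \<Longrightarrow> sum_list (dec lam r) = sum_list lam - 1"
  unfolding dec_def valid_def
  using sum_list_update[of r lam "lam!r - 1"] elem_le_sum_list[of r lam] by simp

lemma cells_dec: "valid lam r \<Longrightarrow> cells (dec lam r) = cells lam - {(r, lam!r - 1)}"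
  unfolding dec_def valid_def cells_def by (auto simp: nth_list_update split: if_splits)

lemma SYT_D:
  assumes "T \<in> SYT lam"
  shows "inj_on T (cells lam)" "T ` cells lam = {1..sum_list lam}"
    "\<And>x. x \<notin> cells lam \<Longrightarrow> T x = 0"
    "\<And>r c. (r, Suc c) \<in> cells lam \<Longrightarrow> T (r, c) < T (r, Suc c)"
    "\<And>r c. (Suc r, c) \<in> cells lam \<Longrightarrow> T (r, c) < T (Suc r, c)"
  using assms by (auto simp: SYT_def bij_betw_def)

lemma SYT_le: assumes "T \<in> SYT lam" shows "T x \<le> sum_list lam"
proof (cases "x \<in> cells lam")
  case True
  hence "T x \<in> {1..sum_list lam}" using SYT_D(2)[OF assms] by blast
  thus ?thesis by simp
next
  case False
  thus ?thesis using SYT_D(3)[OF assms] by simp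
qed

lemma corner:
  assumes T: "T \<in> SYT lam" and p: "(r, c) \<in> cells lam" and Tp: "T (r, c) = sum_list lam"
  shows "valid lam r" "c = lam!r - 1"
proof -
  have rc: "r < length lam" "c < lam!r" using p by (auto simp: cells_def)
  have "\<not> Suc c < lam!r"
  proof
    assume "Suc c < lam!r"
    hence "(r, Suc c) \<in> cells lam" using rc by (auto simp: cells_def)
    hence "T (r, c) < T (r, Suc c)" using SYT_D(4)[OF T] by blast
    thus False using SYT_le[OF T, of "(r, Suc c)"] Tp by simp
  qed
  thus c: "c = lam!r - 1" using rc by simp
  have "Suc r < length lam \<Longrightarrow> lam!(Suc r) < lam!r"
  proof (rule ccontr)
    assume "Suc r < length lam" "\<not> lam!(Suc r) < lam!r"
    hence "(Suc r, c) \<in> cells lam" using rc by (auto simp: cells_def)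
    hence "T (r, c) < T (Suc r, c)" using SYT_D(5)[OF T] by blast
    thus False using SYT_le[OF T, of "(Suc r, c)"] Tp by simp
  qed
  thus "valid lam r" using rc by (auto simp: valid_def)
qed

lemma remove_SYT:
  assumes v: "valid lam r" and T: "T \<in> SYT lam" and Tp: "T (r, lam!r - 1) = sum_list lam"
  shows "T((r, lam!r - 1) := 0) \<in> SYT (dec lam r)"
proof -
  let ?p = "(r, lam!r - 1)"
  let ?T = "T(?p := 0)"
  have pc: "?p \<in> cells lam" using v by (auto simp: valid_def cells_def)
  have cd: "cells (dec lam r) = cells lam - {?p}" by (rule cells_dec[OF v])
  have sd: "sum_list (dec lam r) = sum_list lam - 1" by (rule sum_dec[OF v])
  have "T ?p \<in> {1..sum_list lam}" using SYT_D(2)[OF T] pc by blast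
  hence N1: "sum_list lam \<ge> 1" by simp
  have b: "bij_betw T (cells lam) {1..sum_list lam}" using T by (simp add: SYT_def)
  have "bij_betw T (cells lam - {?p}) ({1..sum_list lam} - {sum_list lam})"
    by (rule bij_betw_DiffI[OF b]) (use pc Tp N1 in \<open>auto simp: bij_betw_def\<close>)
  moreover have "{1..sum_list lam} - {sum_list lam} = {1..sum_list lam - 1}" using N1 by auto
  ultimately have "bij_betw T (cells (dec lam r)) {1..sum_list (dec lam r)}" using cd sd by simp
  hence b2: "bij_betw ?T (cells (dec lam r)) {1..sum_list (dec lam r)}"
    by (rule iffD1[OF bij_betw_cong, rotated]) (auto simp: cd)
  show ?thesis unfolding SYT_def
  proof (intro CollectI conjI allI impI b2)
    fix x assume "x \<notin> cells (dec lam r)" thus "?T x = 0" using SYT_D(3)[OF T, of x] cd by auto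
  next
    fix r' c assume "(r', Suc c) \<in> cells (dec lam r)"
    hence "(r', Suc c) \<in> cells lam" "(r', Suc c) \<noteq> ?p" using cd by auto
    moreover have "T (r', c) < T (r', Suc c)" using SYT_D(4)[OF T] calculation(1) by blast
    ultimately show "?T (r', c) < ?T (r', Suc c)" by auto
  next
    fix r' c assume "(Suc r', c) \<in> cells (dec lam r)"
    hence "(Suc r', c) \<in> cells lam" "(Suc r', c) \<noteq> ?p" using cd by auto
    moreover have "T (r', c) < T (Suc r', c)" using SYT_D(5)[OF T] calculation(1) by blast
    ultimately show "?T (r', c) < ?T (Suc r', c)" by auto
  qed
qed

lemma extend_SYT:
  assumes v: "valid lam r" and T: "T \<in> SYT (dec lam r)"
  shows "T((r, lam!r - 1) := sum_list lam) \<in> SYT lam"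
proof -
  let ?p = "(r, lam!r - 1)"
  let ?T = "T(?p := sum_list lam)"
  have pc: "?p \<in> cells lam" using v by (auto simp: valid_def cells_def)
  have cd: "cells (dec lam r) = cells lam - {?p}" by (rule cells_dec[OF v])
  have sd: "sum_list (dec lam r) = sum_list lam - 1" by (rule sum_dec[OF v])
  have N1: "sum_list lam \<ge> 1" using v elem_le_sum_list[of r lam] by (auto simp: valid_def)
  have b: "bij_betw T (cells (dec lam r)) {1..sum_list lam - 1}" using T sd by (simp add: SYT_def)
  have b1: "bij_betw ?T (cells lam - {?p}) {1..sum_list lam - 1}"
    using b cd by (subst bij_betw_cong[of _ ?T T]) auto
  have b2: "bij_betw ?T {?p} {sum_list lam}" by (simp add: bij_betw_def)
  have "bij_betw ?T ((cells lam - {?p}) \<union> {?p}) ({1..sum_list lam - 1} \<union> {sum_list lam})"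
    by (rule bij_betw_combine[OF b1 b2]) auto
  moreover have "(cells lam - {?p}) \<union> {?p} = cells lam" using pc by auto
  moreover have "{1..sum_list lam - 1} \<union> {sum_list lam} = {1..sum_list lam}" using N1 by auto
  ultimately have bb: "bij_betw ?T (cells lam) {1..sum_list lam}" by simp
  have Tle: "\<And>x. T x \<le> sum_list lam - 1" using SYT_le[OF T] sd by metis
  have Tp0: "T ?p = 0" using SYT_D(3)[OF T] cd by auto
  show ?thesis unfolding SYT_def
  proof (intro CollectI conjI allI impI bb)
    fix x assume "x \<notin> cells lam" thus "?T x = 0" using SYT_D(3)[OF T, of x] cd pc by auto
  next
    fix r' c assume a: "(r', Suc c) \<in> cells lam"
    show "?T (r', c) < ?T (r', Suc c)"
    proof (cases "(r', Suc c) = ?p")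
      case True
      hence "(r', c) \<noteq> ?p" by auto
      thus ?thesis using True Tle[of "(r',c)"] N1 by auto
    next
      case False
      have "(r', c) \<noteq> ?p" using a v by (auto simp: cells_def)
      thus ?thesis using False a cd SYT_D(4)[OF T, of r' c] by auto
    qed
  next
    fix r' c assume a: "(Suc r', c) \<in> cells lam"
    show "?T (r', c) < ?T (Suc r', c)"
    proof (cases "(Suc r', c) = ?p")
      case True
      hence "(r', c) \<noteq> ?p" by auto
      thus ?thesis using True Tle[of "(r',c)"] N1 by auto
    next
      case False
      have "(r', c) \<noteq> ?p" using a v by (auto simp: cells_def valid_def)
      thus ?thesis using False a cd SYT_D(5)[OF T, of r' c] by auto
    qed
  qed
qed


lemma row_of_val:
  assumes T: "T \<in> SYT lam" and x: "x \<in> cells lam" and Tx: "T x = m"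
  shows "row_of lam T m = fst x"
  unfolding row_of_def using the_inv_into_f_eq[OF SYT_D(1)[OF T] Tx x] by simp

lemma row_of_lt:
  assumes T: "T \<in> SYT lam" and m: "1 \<le> m" "m \<le> sum_list lam"
  shows "row_of lam T m < length lam"
proof -
  have "m \<in> T ` cells lam" using SYT_D(2)[OF T] m by auto
  then obtain x where "x \<in> cells lam" "T x = m" by auto
  thus ?thesis using row_of_val[OF T] by (auto simp: cells_def)
qed

lemma max_cell:
  assumes T: "T \<in> SYT lam" and N: "1 \<le> sum_list lam"
  obtains x where "x \<in> cells lam" "T x = sum_list lam"
proof -
  have "sum_list lam \<in> T ` cells lam" using SYT_D(2)[OF T] N by auto
  thus ?thesis using that by auto
qed

lemma row_of_remove:
  assumes v: "valid lam r" and T: "T \<in> SYT lam" and Tp: "T (r, lam!r - 1) = sum_list lam"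
    and m: "1 \<le> m" "m < sum_list lam"
  shows "row_of (dec lam r) (T((r, lam!r - 1) := 0)) m = row_of lam T m"
proof -
  let ?p = "(r, lam!r - 1)"
  have "m \<in> T ` cells lam" using SYT_D(2)[OF T] m by auto
  then obtain x where x: "x \<in> cells lam" "T x = m" by auto
  have xp: "x \<noteq> ?p" using x Tp m by auto
  have "x \<in> cells (dec lam r)" using cells_dec[OF v] x xp by auto
  moreover have "(T(?p := 0)) x = m" using x xp by simp
  ultimately have "row_of (dec lam r) (T(?p := 0)) m = fst x"
    by (rule row_of_val[OF remove_SYT[OF v T Tp]])
  thus ?thesis using row_of_val[OF T x] by simp
qed

lemma row_of_top:
  assumes v: "valid lam r" and T: "T \<in> SYT lam" and Tp: "T (r, lam!r - 1) = sum_list lam"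
  shows "row_of lam T (sum_list lam) = r"
proof -
  have "(r, lam!r - 1) \<in> cells lam" using v by (auto simp: valid_def cells_def)
  from row_of_val[OF T this Tp] show ?thesis by simp
qed

lemma descents_sub: "descents lam T \<subseteq> {1..<sum_list lam}"
  by (auto simp: descents_def)

lemma finite_descents[simp]: "finite (descents lam T)"
  using descents_sub finite_subset by blast

lemma descents_remove:
  assumes v: "valid lam r" and T: "T \<in> SYT lam" and Tp: "T (r, lam!r - 1) = sum_list lam"
  defines "T' \<equiv> T((r, lam!r - 1) := 0)"
  shows "descents lam T = descents (dec lam r) T' \<union>
     (if 2 \<le> sum_list lam \<and> row_of (dec lam r) T' (sum_list lam - 1) < r then {sum_list lam - 1} else {})"
proof -
  let ?N = "sum_list lam"
  have sd: "sum_list (dec lam r) = ?N - 1" by (rule sum_dec[OF v])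
  have rw: "\<And>m. 1 \<le> m \<Longrightarrow> m < ?N \<Longrightarrow> row_of (dec lam r) T' m = row_of lam T m"
    unfolding T'_def by (rule row_of_remove[OF v T Tp])
  have top: "row_of lam T ?N = r" by (rule row_of_top[OF v T Tp])
  show ?thesis
  proof (intro set_eqI iffI)
    fix m assume "m \<in> descents lam T"
    hence m: "1 \<le> m" "m < ?N" "row_of lam T m < row_of lam T (Suc m)" by (auto simp: descents_def)
    show "m \<in> descents (dec lam r) T' \<union>
     (if 2 \<le> ?N \<and> row_of (dec lam r) T' (?N - 1) < r then {?N - 1} else {})"
    proof (cases "Suc m < ?N")
      case True
      thus ?thesis using m rw[of m] rw[of "Suc m"] sd by (auto simp: descents_def)
    next
      case False
      hence "Suc m = ?N" "?N - 1 = m" "2 \<le> ?N" using m by simp_all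
      thus ?thesis using m rw[of m] top by simp
    qed
  next
    fix m assume a: "m \<in> descents (dec lam r) T' \<union>
     (if 2 \<le> ?N \<and> row_of (dec lam r) T' (?N - 1) < r then {?N - 1} else {})"
    show "m \<in> descents lam T"
    proof (cases "m \<in> descents (dec lam r) T'")
      case True
      hence m: "1 \<le> m" "Suc m < ?N" "row_of (dec lam r) T' m < row_of (dec lam r) T' (Suc m)"
        using sd by (auto simp: descents_def)
      thus ?thesis using rw[of m] rw[of "Suc m"] by (auto simp: descents_def)
    next
      case False
      hence m: "m = ?N - 1" "2 \<le> ?N" "row_of (dec lam r) T' (?N - 1) < r"
        using a by (auto split: if_splits)
      hence "Suc m = ?N" by simp
      thus ?thesis using m rw[of m] top by (auto simp: descents_def)
    qed
  qed
qed

lemma des_maj_remove: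
  assumes v: "valid lam r" and T: "T \<in> SYT lam" and Tp: "T (r, lam!r - 1) = sum_list lam"
  defines "T' \<equiv> T((r, lam!r - 1) := 0)"
  defines "d \<equiv> 2 \<le> sum_list lam \<and> row_of (dec lam r) T' (sum_list lam - 1) < r"
  shows "des lam T = des (dec lam r) T' + (if d then 1 else 0)"
    "maj lam T = maj (dec lam r) T' + (if d then sum_list lam - 1 else 0)"
proof -
  have e: "descents lam T = descents (dec lam r) T' \<union> (if d then {sum_list lam - 1} else {})"
    unfolding d_def T'_def by (rule descents_remove[OF v T Tp])
  have "sum_list lam - 1 \<notin> descents (dec lam r) T'"
    using descents_sub[of "dec lam r" T'] sum_dec[OF v] by auto
  thus "des lam T = des (dec lam r) T' + (if d then 1 else 0)"
    "maj lam T = maj (dec lam r) T' + (if d then sum_list lam - 1 else 0)"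
    unfolding des_def maj_def e by auto
qed


definition Gp :: "nat list \<Rightarrow> nat \<Rightarrow> nat \<Rightarrow> 'a::comm_ring_1 \<Rightarrow> 'a" where
  "Gp lam r i q = (\<Sum>T\<in>{T \<in> SYT lam. des lam T = i \<and> row_of lam T (sum_list lam) = r}. q ^ maj lam T)"

lemma G_rec:
  assumes v: "valid lam r"
  defines "d \<equiv> \<lambda>T'. 2 \<le> sum_list lam \<and> row_of (dec lam r) T' (sum_list lam - 1) < r"
  shows "Gp lam r i q = (\<Sum>T'\<in>{T' \<in> SYT (dec lam r). des (dec lam r) T' + (if d T' then 1 else 0) = i}.
            q ^ (maj (dec lam r) T' + (if d T' then sum_list lam - 1 else 0)))"
  unfolding Gp_def
proof (rule sum.reindex_bij_witness[where i = "\<lambda>T'. T'((r, lam!r - 1) := sum_list lam)"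
      and j = "\<lambda>T. T((r, lam!r - 1) := 0)"])
  let ?p = "(r, lam!r - 1)"
  have pc: "?p \<in> cells lam" using v by (auto simp: valid_def cells_def)
  have p0: "\<And>T'. T' \<in> SYT (dec lam r) \<Longrightarrow> T' ?p = 0"
    using cells_dec[OF v] SYT_D(3) by blast
  have topc: "\<And>T. T \<in> SYT lam \<Longrightarrow> row_of lam T (sum_list lam) = r \<Longrightarrow> T ?p = sum_list lam"
  proof -
    fix T assume T: "T \<in> SYT lam" and rT: "row_of lam T (sum_list lam) = r"
    have N: "1 \<le> sum_list lam" using v elem_le_sum_list[of r lam] by (auto simp: valid_def)
    obtain x where x: "x \<in> cells lam" "T x = sum_list lam" using max_cell[OF T N] by blast
    obtain a b where ab: "x = (a, b)" by force
    have "b = lam!a - 1" using corner[OF T x(1)[unfolded ab] x(2)[unfolded ab]] by simp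
    moreover have "a = r" using row_of_val[OF T x] rT ab by simp
    ultimately show "T ?p = sum_list lam" using x ab by simp
  qed
  {
    fix T assume "T \<in> {T \<in> SYT lam. des lam T = i \<and> row_of lam T (sum_list lam) = r}"
    hence T: "T \<in> SYT lam" "des lam T = i" "row_of lam T (sum_list lam) = r" by auto
    have Tp: "T ?p = sum_list lam" using topc T by blast
    show "(T(?p := 0))(?p := sum_list lam) = T" using Tp by auto
    have R: "T(?p := 0) \<in> SYT (dec lam r)" by (rule remove_SYT[OF v T(1) Tp])
    note dm = des_maj_remove[OF v T(1) Tp]
    show "T(?p := 0) \<in> {T' \<in> SYT (dec lam r). des (dec lam r) T' + (if d T' then 1 else 0) = i}"
      using R dm(1) T(2) unfolding d_def by auto
    show "q ^ (maj (dec lam r) (T(?p := 0)) + (if d (T(?p := 0)) then sum_list lam - 1 else 0)) = q ^ maj lam T"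
      using dm(2) unfolding d_def by auto
  }
  {
    fix T' assume "T' \<in> {T' \<in> SYT (dec lam r). des (dec lam r) T' + (if d T' then 1 else 0) = i}"
    hence T': "T' \<in> SYT (dec lam r)" "des (dec lam r) T' + (if d T' then 1 else 0) = i" by auto
    show "(T'(?p := sum_list lam))(?p := 0) = T'" using p0[OF T'(1)] by auto
    let ?T = "T'(?p := sum_list lam)"
    have E: "?T \<in> SYT lam" by (rule extend_SYT[OF v T'(1)])
    have Tp: "?T ?p = sum_list lam" by simp
    have bk: "?T(?p := 0) = T'" using p0[OF T'(1)] by auto
    note dm = des_maj_remove[OF v E Tp, unfolded bk]
    show "?T \<in> {T \<in> SYT lam. des lam T = i \<and> row_of lam T (sum_list lam) = r}"
    proof -
      have "des lam ?T = i" using T'(2) unfolding d_def by (simp only: dm(1))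
      thus ?thesis using E row_of_top[OF v E Tp] by blast
    qed
  }
qed

lemma G_invalid:
  assumes "\<not> valid lam r" "1 \<le> sum_list lam"
  shows "Gp lam r i q = 0"
proof -
  have "{T \<in> SYT lam. des lam T = i \<and> row_of lam T (sum_list lam) = r} = {}"
  proof (rule ccontr)
    assume "\<not> ?thesis"
    then obtain T where T: "T \<in> SYT lam" "row_of lam T (sum_list lam) = r" by auto
    obtain x where x: "x \<in> cells lam" "T x = sum_list lam" using max_cell[OF T(1) assms(2)] by blast
    obtain a b where ab: "x = (a, b)" by force
    have "valid lam a" using corner[OF T(1) x(1)[unfolded ab] x(2)[unfolded ab]] by simp
    moreover have "a = r" using row_of_val[OF T(1) x] T(2) ab by simp
    ultimately show False using assms(1) by simp
  qed
  thus ?thesis unfolding Gp_def by (simp only: sum.empty)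
qed

lemma F_split:
  assumes "1 \<le> sum_list lam"
  shows "fpoly lam i q = (\<Sum>r<length lam. Gp lam r i q)"
proof -
  let ?S = "{T \<in> SYT lam. des lam T = i}"
  have "(\<Sum>r<length lam. sum (\<lambda>T. q ^ maj lam T) {T \<in> ?S. row_of lam T (sum_list lam) = r})
        = sum (\<lambda>T. q ^ maj lam T) ?S"
    by (rule sum.group) (use SYT_finite row_of_lt assms in auto)
  moreover have "\<And>r. {T \<in> ?S. row_of lam T (sum_list lam) = r} =
     {T \<in> SYT lam. des lam T = i \<and> row_of lam T (sum_list lam) = r}" by auto
  ultimately show ?thesis unfolding fpoly_def Gp_def by simp
qed


definition qok :: "complex \<Rightarrow> bool" where "qok q \<longleftrightarrow> (\<forall>m::nat. m \<ge> 1 \<longrightarrow> q ^ m \<noteq> 1)"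

lemma qok_ne: "qok q \<Longrightarrow> 1 - q ^ Suc m \<noteq> 0"
  unfolding qok_def by (metis eq_iff_diff_eq_0 le_add1 plus_1_eq_Suc)

lemma qok_ne': "qok q \<Longrightarrow> 0 < m \<Longrightarrow> 1 - q ^ m \<noteq> 0"
  using qok_ne[of q "m - 1"] by simp

lemma frac_aux: "(u::complex) \<noteq> 0 \<Longrightarrow> v \<noteq> 0 \<Longrightarrow> a \<noteq> 0 \<Longrightarrow> b \<noteq> 0 \<Longrightarrow>
   x / (a * u * b) = x / (a * (b * v)) * v / u"
  by (simp add: field_simps)

lemma frac_aux2: "(u::complex) \<noteq> 0 \<Longrightarrow> a \<noteq> 0 \<Longrightarrow> b \<noteq> 0 \<Longrightarrow>
   x * v / (a * u * b) = x / (a * b) * v / u"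
  by (simp add: field_simps)

lemma qpoch_Suc: "qpoch q (Suc m) = qpoch q m * (1 - q ^ Suc m)"
  unfolding qpoch_def by (simp add: mult.commute)

lemma qpoch_0[simp]: "qpoch q 0 = 1" unfolding qpoch_def by simp

lemma qpoch_ne: "qok q \<Longrightarrow> qpoch q m \<noteq> (0::complex)"
proof (induction m)
  case (Suc m)
  have "1 - q ^ Suc m \<noteq> 0" by (rule qok_ne[OF Suc.prems])
  thus ?case using Suc by (simp add: qpoch_Suc del: power_Suc)
qed simp

definition gb :: "complex \<Rightarrow> nat \<Rightarrow> nat \<Rightarrow> complex" where
  "gb q m j = (if j \<le> m then qpoch q m / (qpoch q j * qpoch q (m - j)) else 0)"


lemma gb_m0: "qok q \<Longrightarrow> gb q m 0 = 1"
  unfolding gb_def using qpoch_ne[of q m] by simp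

lemma gb_big: "m < j \<Longrightarrow> gb q m j = 0"
  unfolding gb_def by simp

lemma gb_L1: assumes "qok q"
  shows "gb q m (Suc j) = gb q m j * (1 - q ^ (m - j)) / (1 - q ^ Suc j)"
proof (cases "Suc j \<le> m")
  case True
  then obtain d where d: "m = Suc j + d" using le_Suc_ex by blast
  have e1: "gb q m (Suc j) = qpoch q m / (qpoch q j * (1 - q ^ Suc j) * qpoch q d)"
    unfolding gb_def using d by (simp add: qpoch_Suc del: power_Suc)
  have e2: "gb q m j = qpoch q m / (qpoch q j * (qpoch q d * (1 - q ^ Suc d)))"
    unfolding gb_def using d by (simp add: qpoch_Suc del: power_Suc)
  have e3: "m - j = Suc d" using d by simp
  show ?thesis unfolding e1 e2 e3
    by (rule frac_aux) (use qok_ne[OF assms] qpoch_ne[OF assms] in auto)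
next
  case False
  hence "m \<le> j" by simp
  thus ?thesis unfolding gb_def by (cases "m = j") auto
qed

lemma gb_L2: assumes "qok q"
  shows "gb q (Suc m) (Suc j) = gb q m j * (1 - q ^ Suc m) / (1 - q ^ Suc j)"
proof (cases "j \<le> m")
  case True
  have e1: "gb q (Suc m) (Suc j) = qpoch q m * (1 - q ^ Suc m) / (qpoch q j * (1 - q ^ Suc j) * qpoch q (m - j))"
    unfolding gb_def using True by (simp add: qpoch_Suc del: power_Suc)
  have e2: "gb q m j = qpoch q m / (qpoch q j * qpoch q (m - j))"
    unfolding gb_def using True by simp
  show ?thesis unfolding e1 e2
    by (rule frac_aux2) (use qok_ne[OF assms] qpoch_ne[OF assms] in auto)
next
  case False
  then show ?thesis unfolding gb_def by simp
qed


definition C0 :: "complex \<Rightarrow> nat \<Rightarrow> nat \<Rightarrow> nat \<Rightarrow> complex" where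
  "C0 q a b i = (if b = 0 then (if i = 0 then 1 else 0) else if i = 0 then 0 else
     q ^ (i * (i - 1) + b) * (1 - q ^ (Suc a - b)) / (1 - q ^ Suc a) * gb q (Suc a) i * gb q (b - 1) (i - 1))"

lemma pow_cong: "m = n \<Longrightarrow> (q::complex) ^ m = q ^ n" by simp

lemma E0_generic:
  assumes q: "qok q"
  shows "C0 q (s+2+y+z) (s+2+y) (s+2) = C0 q (s+1+y+z) (s+2+y) (s+2) + C0 q (s+2+y+z) (s+1+y) (s+2)
     - C0 q (s+1+y+z) (s+1+y) (s+2) + q^(2*s+3+2*y+z) * C0 q (s+1+y+z) (s+1+y) (s+1)"
proof -
  define A where "A = gb q (s+2+y+z) (s+1)"
  define B where "B = gb q (s+y) s"
  define P where "P = q^(s*s)"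
  define S where "S = q^s"
  define Y where "Y = q^y"
  define Z where "Z = q^z"
  have p: "q^(Suc (s+2+y+z)) = q^3*S*Y*Z" "q^(Suc (s+1)) = q^2*S" "q^(s+2+y+z - (s+1)) = q*Y*Z"
    "q^(Suc (s+y)) = q*S*Y" "q^(Suc s) = q*S" "q^(s+y-s) = Y" "q^(s+2) = q^2*S"
    "q^(Suc (s+1+y+z)) = q^2*S*Y*Z" "q^(s+1) = q*S"
    "q^((s+2)*(s+1)+(s+2+y)) = P*S^4*q^4*Y" "q^(Suc z) = q*Z"
    "q^((s+2)*(s+1)+(s+1+y)) = P*S^4*q^3*Y" "q^(Suc (Suc z)) = q^2*Z" "q^z = Z"
    "q^((s+1)*s+(s+1+y)) = P*S^2*q*Y" "q^(2*s+3+2*y+z) = S^2*q^3*Y^2*Z"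
    unfolding P_def S_def Y_def Z_def
    by (simp_all only: power_add[symmetric] power_mult[symmetric] power_Suc[symmetric] power_Suc2[symmetric]) (rule pow_cong, simp add: algebra_simps)+
  have e: "Suc (s+1) = s+2" by simp
  have g1: "gb q (Suc (s+2+y+z)) (s+2) = A * (1 - q^3*S*Y*Z) / (1 - q^2*S)"
    using gb_L2[OF q, of "s+2+y+z" "s+1"] unfolding A_def p e .
  have g2: "gb q (s+2+y+z) (s+2) = A * (1 - q*Y*Z) / (1 - q^2*S)"
    using gb_L1[OF q, of "s+2+y+z" "s+1"] unfolding A_def p e .
  have g3: "gb q (s+1+y) (s+1) = B * (1 - q*S*Y) / (1 - q*S)"
    using gb_L2[OF q, of "s+y" "s"] unfolding B_def p by simp
  have g4: "gb q (s+y) (s+1) = B * (1 - Y) / (1 - q*S)"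
    using gb_L1[OF q, of "s+y" "s"] unfolding B_def p by simp
  have n1: "1 - q^2*S \<noteq> 0" "1 - q*S \<noteq> 0" "1 - q^3*S*Y*Z \<noteq> 0" "1 - q^2*S*Y*Z \<noteq> 0"
    using qok_ne[OF q, of "s+1"] qok_ne[OF q, of "s"] qok_ne[OF q, of "s+2+y+z"] qok_ne[OF q, of "s+1+y+z"]
    unfolding p(1,2,5,8) by auto
  have c1: "C0 q (s+2+y+z) (s+2+y) (s+2) = P*S^4*q^4*Y*(1-q*Z)/(1-q^3*S*Y*Z)*(A*(1-q^3*S*Y*Z)/(1-q^2*S))*(B*(1-q*S*Y)/(1-q*S))"
  proof -
    have raw: "C0 q (s+2+y+z) (s+2+y) (s+2) = q^((s+2)*(s+1)+(s+2+y)) * (1 - q^(Suc z)) / (1 - q^(Suc (s+2+y+z))) * gb q (Suc (s+2+y+z)) (s+2) * gb q (s+1+y) (s+1)"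
      by (simp add: C0_def)
    show ?thesis by (simp only: raw g1 g3 p)
  qed
  have c2: "C0 q (s+1+y+z) (s+2+y) (s+2) = P*S^4*q^4*Y*(1-Z)/(1-q^2*S*Y*Z)*(A*(1-q*Y*Z)/(1-q^2*S))*(B*(1-q*S*Y)/(1-q*S))"
  proof -
    have raw: "C0 q (s+1+y+z) (s+2+y) (s+2) = q^((s+2)*(s+1)+(s+2+y)) * (1 - q^z) / (1 - q^(Suc (s+1+y+z))) * gb q (s+2+y+z) (s+2) * gb q (s+1+y) (s+1)"
      by (simp add: C0_def)
    show ?thesis by (simp only: raw g2 g3 p)
  qed
  have c3: "C0 q (s+2+y+z) (s+1+y) (s+2) = P*S^4*q^3*Y*(1-q^2*Z)/(1-q^3*S*Y*Z)*(A*(1-q^3*S*Y*Z)/(1-q^2*S))*(B*(1-Y)/(1-q*S))"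
  proof -
    have raw: "C0 q (s+2+y+z) (s+1+y) (s+2) = q^((s+2)*(s+1)+(s+1+y)) * (1 - q^(Suc (Suc z))) / (1 - q^(Suc (s+2+y+z))) * gb q (Suc (s+2+y+z)) (s+2) * gb q (s+y) (s+1)"
      by (simp add: C0_def)
    show ?thesis by (simp only: raw g1 g4 p)
  qed
  have c4: "C0 q (s+1+y+z) (s+1+y) (s+2) = P*S^4*q^3*Y*(1-q*Z)/(1-q^2*S*Y*Z)*(A*(1-q*Y*Z)/(1-q^2*S))*(B*(1-Y)/(1-q*S))"
  proof -
    have raw: "C0 q (s+1+y+z) (s+1+y) (s+2) = q^((s+2)*(s+1)+(s+1+y)) * (1 - q^(Suc z)) / (1 - q^(Suc (s+1+y+z))) * gb q (s+2+y+z) (s+2) * gb q (s+y) (s+1)"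
      by (simp add: C0_def)
    show ?thesis by (simp only: raw g2 g4 p)
  qed
  have c5: "C0 q (s+1+y+z) (s+1+y) (s+1) = P*S^2*q*Y*(1-q*Z)/(1-q^2*S*Y*Z)*A*B"
  proof -
    have raw: "C0 q (s+1+y+z) (s+1+y) (s+1) = q^((s+1)*s+(s+1+y)) * (1 - q^(Suc z)) / (1 - q^(Suc (s+1+y+z))) * gb q (s+2+y+z) (s+1) * gb q (s+y) s"
      by (simp add: C0_def)
    show ?thesis unfolding A_def B_def by (simp only: raw p)
  qed
  define D1 where "D1 = 1 - q^2*S"
  define D2 where "D2 = 1 - q*S"
  define D3 where "D3 = 1 - q^3*S*Y*Z"
  define D4 where "D4 = 1 - q^2*S*Y*Z"
  have nD: "D1 \<noteq> 0" "D2 \<noteq> 0" "D3 \<noteq> 0" "D4 \<noteq> 0" using n1 unfolding D1_def D2_def D3_def D4_def by auto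
  define f where "f = A*B*P*Y*q^3*S^2"
  define Dl where "Dl = D1*D2*D4"
  have nDl: "Dl \<noteq> 0" using nD unfolding Dl_def by simp
  have t1: "P*S^4*q^4*Y*(1-q*Z)/D3*(A*D3/D1)*(B*(1-q*S*Y)/D2) = f * (S^2*q*(1-q*Z)*(1-q*S*Y)*D4) / Dl"
    unfolding f_def Dl_def using nD by (simp add: field_simps, algebra?)
  have t2: "P*S^4*q^4*Y*(1-Z)/D4*(A*(1-q*Y*Z)/D1)*(B*(1-q*S*Y)/D2) = f * (S^2*q*(1-Z)*(1-q*Y*Z)*(1-q*S*Y)) / Dl"
    unfolding f_def Dl_def using nD by (simp add: field_simps, algebra?)
  have t3: "P*S^4*q^3*Y*(1-q^2*Z)/D3*(A*D3/D1)*(B*(1-Y)/D2) = f * (S^2*(1-q^2*Z)*(1-Y)*D4) / Dl"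
    unfolding f_def Dl_def using nD by (simp add: field_simps, algebra?)
  have t4: "P*S^4*q^3*Y*(1-q*Z)/D4*(A*(1-q*Y*Z)/D1)*(B*(1-Y)/D2) = f * (S^2*(1-q*Z)*(1-q*Y*Z)*(1-Y)) / Dl"
    unfolding f_def Dl_def using nD by (simp add: field_simps, algebra?)
  have t5: "S^2*q^3*Y^2*Z * (P*S^2*q*Y*(1-q*Z)/D4*A*B) = f * (S^2*Y^2*Z*q*(1-q*Z)*D1*D2) / Dl"
    unfolding f_def Dl_def using nD by (simp add: field_simps, algebra?)
  have N: "S^2*q*(1-q*Z)*(1-q*S*Y)*D4 = S^2*q*(1-Z)*(1-q*Y*Z)*(1-q*S*Y) + S^2*(1-q^2*Z)*(1-Y)*D4
     - S^2*(1-q*Z)*(1-q*Y*Z)*(1-Y) + S^2*Y^2*Z*q*(1-q*Z)*D1*D2"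
    unfolding D1_def D2_def D4_def by algebra
  have "P*S^4*q^4*Y*(1-q*Z)/D3*(A*D3/D1)*(B*(1-q*S*Y)/D2) = P*S^4*q^4*Y*(1-Z)/D4*(A*(1-q*Y*Z)/D1)*(B*(1-q*S*Y)/D2)
     + P*S^4*q^3*Y*(1-q^2*Z)/D3*(A*D3/D1)*(B*(1-Y)/D2) - P*S^4*q^3*Y*(1-q*Z)/D4*(A*(1-q*Y*Z)/D1)*(B*(1-Y)/D2)
     + S^2*q^3*Y^2*Z * (P*S^2*q*Y*(1-q*Z)/D4*A*B)"
    unfolding t1 t2 t3 t4 t5 N by (simp add: add_divide_distrib diff_divide_distrib algebra_simps)
  thus ?thesis unfolding c1 c2 c3 c4 c5 p(16) D1_def D2_def D3_def D4_def .
qed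



lemma div_helper: "(d::complex) \<noteq> 0 \<Longrightarrow> x = y + z * d \<Longrightarrow> x / d = y / d + z"
  by (simp add: field_simps)

lemma div4: "x = y + u - v \<Longrightarrow> x / d = y / d + u / d - v / (d::complex)"
  by (simp add: diff_divide_distrib add_divide_distrib)

lemma gb_1: "qok q \<Longrightarrow> gb q (Suc m) (Suc 0) = (1 - q ^ Suc m) / (1 - q)"
  using gb_L2[of q m 0] gb_m0[of q m] by simp

lemma E0:
  assumes q: "qok q" and b: "1 \<le> b" "b \<le> a"
  shows "C0 q a b i = C0 q (a-1) b i + C0 q a (b-1) i - C0 q (a-1) (b-1) i
     + (if 1 \<le> i then q^(a+b-1) * C0 q (a-1) (b-1) (i-1) else 0)"
proof -
  consider "i = 0" | "i = 1" | "2 \<le> i" "b = 1" | "2 \<le> i" "2 \<le> b" "b < i" | "2 \<le> i" "2 \<le> b" "i \<le> b"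
    using b by linarith
  then show ?thesis
  proof cases
    case 1 thus ?thesis using b by (simp add: C0_def)
  next
    case 2
    have nq: "1 - q \<noteq> 0" using qok_ne[OF q, of 0] by simp
    show ?thesis
    proof (cases "b = 1")
      case True
      obtain a' where a': "a = Suc a'" using b by (cases a) auto
      have n1: "1 - q ^ Suc a' \<noteq> 0" "1 - q ^ Suc (Suc a') \<noteq> 0" by (rule qok_ne[OF q])+
      have c1: "C0 q a 1 1 = q * (1 - q^(Suc a')) / (1 - q)"
        using n1 a' by (simp add: C0_def gb_1[OF q] gb_m0[OF q] del: power_Suc)
      have c2: "C0 q (a-1) 1 1 = q * (1 - q^a') / (1 - q)"
        using n1 a' by (simp add: C0_def gb_1[OF q] gb_m0[OF q] del: power_Suc)
      have c3: "q * (1 - q^(Suc a')) / (1 - q) = q * (1 - q^a') / (1 - q) + q ^ (Suc a')"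
        by (rule div_helper[OF nq]) (simp add: algebra_simps)
      show ?thesis using 2 True a' c1 c2 c3 by (simp add: C0_def del: power_Suc)
    next
      case False
      define t where "t = b - 2"
      define z where "z = a - b"
      have tz: "b = Suc (Suc t)" "a = b + z" using False b unfolding t_def z_def by auto
      have n1: "1 - q ^ (Suc (Suc t) + z) \<noteq> 0" "1 - q ^ Suc (Suc (Suc t) + z) \<noteq> 0" by (rule qok_ne'[OF q], simp)+
      have c1: "C0 q a b 1 = q^(Suc (Suc t)) * (1 - q^(Suc z)) / (1 - q)"
        using n1 tz by (simp add: C0_def gb_1[OF q] gb_m0[OF q] del: power_Suc)
      have c2: "C0 q (a-1) b 1 = q^(Suc (Suc t)) * (1 - q^z) / (1 - q)"
        using n1 tz by (simp add: C0_def gb_1[OF q] gb_m0[OF q] del: power_Suc)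
      have c3: "C0 q a (b-1) 1 = q^(Suc t) * (1 - q^(Suc (Suc z))) / (1 - q)"
        using n1 tz by (simp add: C0_def gb_1[OF q] gb_m0[OF q] del: power_Suc)
      have c4: "C0 q (a-1) (b-1) 1 = q^(Suc t) * (1 - q^(Suc z)) / (1 - q)"
        using n1 tz by (simp add: C0_def gb_1[OF q] gb_m0[OF q] del: power_Suc)
      have c5: "C0 q (a-1) (b-1) 0 = 0" using tz by (simp add: C0_def)
      have c6: "q^(Suc (Suc t)) * (1 - q^(Suc z)) / (1 - q) = q^(Suc (Suc t)) * (1 - q^z) / (1 - q)
         + q^(Suc t) * (1 - q^(Suc (Suc z))) / (1 - q) - q^(Suc t) * (1 - q^(Suc z)) / (1 - q)"
        by (rule div4) (simp add: algebra_simps)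
      show ?thesis using 2 c1 c2 c3 c4 c5 c6 by simp
    qed
  next
    case 3 thus ?thesis using b by (simp add: C0_def gb_big)
  next
    case 4 thus ?thesis using b by (simp add: C0_def gb_big)
  next
    case 5
    obtain s where s: "i = s + 2" using 5 by (metis add.commute le_Suc_ex add_2_eq_Suc')
    obtain y where y: "b = s + 2 + y" using 5 s le_Suc_ex by (metis le_add_diff_inverse)
    obtain z where z: "a = s + 2 + y + z" using b y le_Suc_ex by (metis le_add_diff_inverse)
    have e: "a + b - 1 = 2*s+3+2*y+z" "a - 1 = s+1+y+z" "b - 1 = s+1+y" "i - 1 = s + 1" using s y z by auto
    show ?thesis unfolding e using E0_generic[OF q, of s y z] s y z by simp
  qed
qed


definition C1 :: "complex \<Rightarrow> nat \<Rightarrow> nat \<Rightarrow> nat \<Rightarrow> complex" where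
  "C1 q a b i = (if i = 0 then 0 else
     q ^ ((i - 1) * (i - 1) + b + 1) * (1 - q ^ (i - 1)) * (1 - q ^ (Suc a - b)) / ((1 - q ^ i) * (1 - q))
       * gb q (Suc a) (i - 1) * gb q b (i - 1))"

lemma E1_generic:
  assumes q: "qok q"
  shows "C1 q (s+1+y+z) (s+1+y) (s+2) = C1 q (s+y+z) (s+1+y) (s+2) + C1 q (s+1+y+z) (s+y) (s+2)
     - C1 q (s+y+z) (s+y) (s+2) + (q^(2*s+2+2*y+z) * C1 q (s+y+z) (s+y) (s+1) + q^(2*s+2+2*y+z) * C0 q (s+1+y+z) (s+1+y) (s+1))"
proof -
  define A where "A = gb q (s+1+y+z) s"
  define B where "B = gb q (s+y) s"
  define P where "P = q^(s*s)"
  define S where "S = q^s"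
  define Y where "Y = q^y"
  define Z where "Z = q^z"
  define D1 where "D1 = 1 - q*S"
  define D2 where "D2 = 1 - q^2*S"
  define Dq where "Dq = 1 - q"
  define D3 where "D3 = 1 - q^2*S*Y*Z"
  have p: "1 - q^(Suc (s+1+y+z)) = D3" "1 - q^(Suc s) = D1" "q^(s+1+y+z - s) = q*Y*Z"
    "q^(Suc (s+y)) = q*S*Y" "q^(s+y-s) = Y" "1 - q^(s+2) = D2" "1 - q^(s+1) = D1" "1 - q = Dq"
    "q^((s+1)*(s+1)+(s+1+y)+1) = P*S^3*q^3*Y" "q^(Suc z) = q*Z"
    "q^((s+1)*(s+1)+(s+y)+1) = P*S^3*q^2*Y" "q^(Suc (Suc z)) = q^2*Z" "q^z = Z" "q^s = S"
    "q^(s*s+(s+y)+1) = P*S*q*Y" "q^((s+1)*s+(s+1+y)) = P*S^2*q*Y" "q^(2*s+2+2*y+z) = S^2*q^2*Y^2*Z" "q^(s+1+y) = q*S*Y"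
    unfolding P_def S_def Y_def Z_def D1_def D2_def D3_def Dq_def
    by (simp_all only: power_add[symmetric] power_mult[symmetric] power_Suc[symmetric] power_Suc2[symmetric]) (rule arg_cong[where f="\<lambda>x. 1 - x"] pow_cong, simp add: algebra_simps)+
  have e: "Suc s = s+1" "Suc (s+y) = s+1+y" by simp_all
  have nD: "D1 \<noteq> 0" "D2 \<noteq> 0" "Dq \<noteq> 0" "D3 \<noteq> 0"
    unfolding p(2,6,8,1)[symmetric]
    using qok_ne[OF q, of s] qok_ne'[OF q, of "s+2"] qok_ne[OF q, of 0] qok_ne[OF q, of "s+1+y+z"] by auto
  have gA1: "gb q (Suc (s+1+y+z)) (s+1) = A * D3 / D1"
    using gb_L2[OF q, of "s+1+y+z" s] unfolding A_def p e .
  have gA2: "gb q (s+1+y+z) (s+1) = A * (1 - q*Y*Z) / D1"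
    using gb_L1[OF q, of "s+1+y+z" s] unfolding A_def p e .
  have gB1: "gb q (s+1+y) (s+1) = B * (1 - q*S*Y) / D1"
    using gb_L2[OF q, of "s+y" s] unfolding B_def p e .
  have gB2: "gb q (s+y) (s+1) = B * (1 - Y) / D1"
    using gb_L1[OF q, of "s+y" s] unfolding B_def p e .
  have c0: "C1 q (s+1+y+z) (s+1+y) (s+2) = P*S^3*q^3*Y * D1 * (1 - q*Z) / (D2 * Dq) * (A*D3/D1) * (B*(1-q*S*Y)/D1)"
  proof -
    have raw: "C1 q (s+1+y+z) (s+1+y) (s+2) = q^((s+1)*(s+1)+(s+1+y)+1) * (1 - q^(s+1)) * (1 - q^(Suc z)) / ((1 - q^(s+2)) * (1 - q)) * gb q (Suc (s+1+y+z)) (s+1) * gb q (s+1+y) (s+1)"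
      by (simp add: C1_def)
    show ?thesis by (simp only: raw gA1 gB1 p)
  qed
  have c1: "C1 q (s+y+z) (s+1+y) (s+2) = P*S^3*q^3*Y * D1 * (1 - Z) / (D2 * Dq) * (A*(1-q*Y*Z)/D1) * (B*(1-q*S*Y)/D1)"
  proof -
    have raw: "C1 q (s+y+z) (s+1+y) (s+2) = q^((s+1)*(s+1)+(s+1+y)+1) * (1 - q^(s+1)) * (1 - q^z) / ((1 - q^(s+2)) * (1 - q)) * gb q (s+1+y+z) (s+1) * gb q (s+1+y) (s+1)"
      by (simp add: C1_def)
    show ?thesis by (simp only: raw gA2 gB1 p)
  qed
  have c2: "C1 q (s+1+y+z) (s+y) (s+2) = P*S^3*q^2*Y * D1 * (1 - q^2*Z) / (D2 * Dq) * (A*D3/D1) * (B*(1-Y)/D1)"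
  proof -
    have raw: "C1 q (s+1+y+z) (s+y) (s+2) = q^((s+1)*(s+1)+(s+y)+1) * (1 - q^(s+1)) * (1 - q^(Suc (Suc z))) / ((1 - q^(s+2)) * (1 - q)) * gb q (Suc (s+1+y+z)) (s+1) * gb q (s+y) (s+1)"
      by (simp add: C1_def)
    show ?thesis by (simp only: raw gA1 gB2 p)
  qed
  have c3: "C1 q (s+y+z) (s+y) (s+2) = P*S^3*q^2*Y * D1 * (1 - q*Z) / (D2 * Dq) * (A*(1-q*Y*Z)/D1) * (B*(1-Y)/D1)"
  proof -
    have raw: "C1 q (s+y+z) (s+y) (s+2) = q^((s+1)*(s+1)+(s+y)+1) * (1 - q^(s+1)) * (1 - q^(Suc z)) / ((1 - q^(s+2)) * (1 - q)) * gb q (s+1+y+z) (s+1) * gb q (s+y) (s+1)"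
      by (simp add: C1_def)
    show ?thesis by (simp only: raw gA2 gB2 p)
  qed
  have c4: "C1 q (s+y+z) (s+y) (s+1) = P*S*q*Y*(1-S)*(1-q*Z)/(D1*Dq) * A * B"
  proof -
    have raw: "C1 q (s+y+z) (s+y) (s+1) = q^(s*s+(s+y)+1) * (1 - q^s) * (1 - q^(Suc z)) / ((1 - q^(s+1)) * (1 - q)) * gb q (s+1+y+z) s * gb q (s+y) s"
      by (simp add: C1_def)
    show ?thesis by (simp only: raw p A_def[symmetric] B_def[symmetric])
  qed
  have c5: "C0 q (s+1+y+z) (s+1+y) (s+1) = P*S^2*q*Y*(1-q*Z)/D3*(A*D3/D1)*B"
  proof -
    have raw: "C0 q (s+1+y+z) (s+1+y) (s+1) = q^((s+1)*s+(s+1+y)) * (1 - q^(Suc z)) / (1 - q^(Suc (s+1+y+z))) * gb q (Suc (s+1+y+z)) (s+1) * gb q (s+y) s"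
      by (simp add: C0_def)
    show ?thesis by (simp only: raw gA1 p B_def[symmetric])
  qed
  define f where "f = A*B*P*Y*S^3*q^2"
  define Dl where "Dl = D1*D2*Dq"
  have t0: "P*S^3*q^3*Y * D1 * (1 - q*Z) / (D2 * Dq) * (A*D3/D1) * (B*(1-q*S*Y)/D1) = f * (q*(1-q*Z)*D3*(1-q*S*Y)) / Dl"
    unfolding f_def Dl_def using nD by (simp add: field_simps, algebra?)
  have t1: "P*S^3*q^3*Y * D1 * (1 - Z) / (D2 * Dq) * (A*(1-q*Y*Z)/D1) * (B*(1-q*S*Y)/D1) = f * (q*(1-Z)*(1-q*Y*Z)*(1-q*S*Y)) / Dl"
    unfolding f_def Dl_def using nD by (simp add: field_simps, algebra?)
  have t2: "P*S^3*q^2*Y * D1 * (1 - q^2*Z) / (D2 * Dq) * (A*D3/D1) * (B*(1-Y)/D1) = f * ((1-q^2*Z)*D3*(1-Y)) / Dl"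
    unfolding f_def Dl_def using nD by (simp add: field_simps, algebra?)
  have t3: "P*S^3*q^2*Y * D1 * (1 - q*Z) / (D2 * Dq) * (A*(1-q*Y*Z)/D1) * (B*(1-Y)/D1) = f * ((1-q*Z)*(1-q*Y*Z)*(1-Y)) / Dl"
    unfolding f_def Dl_def using nD by (simp add: field_simps, algebra?)
  have t4: "S^2*q^2*Y^2*Z * (P*S*q*Y*(1-S)*(1-q*Z)/(D1*Dq) * A * B) = f * (q*Y^2*Z*(1-S)*(1-q*Z)*D2) / Dl"
    unfolding f_def Dl_def using nD by (simp add: field_simps, algebra?)
  have t5: "S^2*q^2*Y^2*Z * (P*S^2*q*Y*(1-q*Z)/D3*(A*D3/D1)*B) = f * (S*q*Y^2*Z*(1-q*Z)*D2*Dq) / Dl"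
    unfolding f_def Dl_def using nD by (simp add: field_simps, algebra?)
  have N: "q*(1-q*Z)*D3*(1-q*S*Y) = q*(1-Z)*(1-q*Y*Z)*(1-q*S*Y) + (1-q^2*Z)*D3*(1-Y)
     - (1-q*Z)*(1-q*Y*Z)*(1-Y) + (q*Y^2*Z*(1-S)*(1-q*Z)*D2 + S*q*Y^2*Z*(1-q*Z)*D2*Dq)"
    unfolding D2_def D3_def Dq_def by algebra
  have "f * (q*(1-q*Z)*D3*(1-q*S*Y)) / Dl = f * (q*(1-Z)*(1-q*Y*Z)*(1-q*S*Y)) / Dl + f * ((1-q^2*Z)*D3*(1-Y)) / Dl
     - f * ((1-q*Z)*(1-q*Y*Z)*(1-Y)) / Dl + (f * (q*Y^2*Z*(1-S)*(1-q*Z)*D2) / Dl + f * (S*q*Y^2*Z*(1-q*Z)*D2*Dq) / Dl)"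
    unfolding N by (simp add: add_divide_distrib diff_divide_distrib algebra_simps)
  thus ?thesis unfolding c0 c1 c2 c3 c4 c5 p(17) t0 t1 t2 t3 t4 t5 .
qed


lemma E1:
  assumes q: "qok q" and b: "1 \<le> b" "b \<le> a"
  shows "C1 q a b i = C1 q (a-1) b i + C1 q a (b-1) i - C1 q (a-1) (b-1) i
     + (if 1 \<le> i then q^(a+b) * C1 q (a-1) (b-1) (i-1) + q^(a+b) * C0 q a b (i-1) else 0)"
proof -
  consider "i = 0" | "i = 1" | "2 \<le> i" "b + 1 < i" | "2 \<le> i" "i \<le> b + 1"
    using b by linarith
  then show ?thesis
  proof cases
    case 1 thus ?thesis using b by (simp add: C1_def)
  next
    case 2 thus ?thesis using b by (simp add: C1_def C0_def)
  next
    case 3 thus ?thesis using b by (simp add: C1_def C0_def gb_big)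
  next
    case 4
    define s where "s = i - 2"
    define y where "y = b - 1 - s"
    define z where "z = a - b"
    have syz: "i = s + 2" "b = s + 1 + y" "a = s + 1 + y + z" using 4 b unfolding s_def y_def z_def by auto
    have e: "a + b = 2*s+2+2*y+z" "a - 1 = s+y+z" "b - 1 = s+y" "i - 1 = s + 1" using syz by auto
    show ?thesis unfolding e using E1_generic[OF q, of s y z] syz by simp
  qed
qed


definition C2 :: "complex \<Rightarrow> nat \<Rightarrow> nat \<Rightarrow> nat \<Rightarrow> complex" where
  "C2 q a b i = (if i < 2 then 0 else
     q ^ ((i - 2) * (i - 1) + b + 4) * ((1 - q ^ (Suc a - b)) * (1 - q ^ (b - 1)) * (1 - q ^ a))
       / ((1 - q ^ (i - 1)) * (1 - q) * (1 - q ^ 2)) * gb q (Suc a) (i - 2) * gb q b (i - 2))"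

lemma E2_generic:
  assumes q: "qok q" and sy: "1 \<le> s + y"
  shows "C2 q (s+1+y+z) (s+1+y) (s+3) = C2 q (s+y+z) (s+1+y) (s+3) + C2 q (s+1+y+z) (s+y) (s+3)
     - C2 q (s+y+z) (s+y) (s+3) + (q^(2*s+3+2*y+z) * C2 q (s+y+z) (s+y) (s+2)
     + q^(2*s+2+2*y+z) * C0 q (s+1+y+z) (s+1+y) (s+2)
     + q^(2*s+3+2*y+z) * (C1 q (s+1+y+z) (s+1+y) (s+2) - q^(2*s+2+2*y+z) * C0 q (s+1+y+z) (s+1+y) (s+1)))"
proof -
  define A where "A = gb q (s+1+y+z) s"
  define B where "B = gb q (s+y) s"
  define P where "P = q^(s*s)"
  define S where "S = q^s"
  define Y where "Y = q^y"
  define Z where "Z = q^z"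
  define W where "W = q^(s+y-1)"
  define D1 where "D1 = 1 - q*S"
  define D2 where "D2 = 1 - q^2*S"
  define Dq where "Dq = 1 - q"
  define Dq2 where "Dq2 = 1 - q^2"
  define D3 where "D3 = 1 - q^2*S*Y*Z"
  have p: "1 - q^(Suc (s+1+y+z)) = D3" "1 - q^(Suc s) = D1" "q^(s+1+y+z - s) = q*Y*Z"
    "q^(Suc (s+y)) = q*S*Y" "q^(s+y-s) = Y" "1 - q^(s+2) = D2" "1 - q^(s+1) = D1" "1 - q = Dq"
    "1 - q^2 = Dq2" "q^(Suc z) = q*Z" "q^(Suc (Suc z)) = q^2*Z" "q^z = Z"
    "q^(s+y) = S*Y" "q^(s+1+y+z) = q*S*Y*Z" "q^(s+y+z) = S*Y*Z" "q^(s+1+y) = q*S*Y"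
    "q^(Suc (s+1+y+z) - (s+1)) = q*Y*Z" "1 - q^(Suc (s+1)) = D2"
    "q^((s+1)*(s+2)+(s+1+y)+4) = P*S^4*q^7*Y" "q^((s+1)*(s+2)+(s+y)+4) = P*S^4*q^6*Y"
    "q^(s*(s+1)+(s+y)+4) = P*S^2*q^4*Y" "q^((s+2)*(s+1)+(s+1+y)) = P*S^4*q^3*Y"
    "q^((s+1)*(s+1)+(s+1+y)+1) = P*S^3*q^3*Y" "q^((s+1)*s+(s+1+y)) = P*S^2*q*Y"
    "q^(2*s+3+2*y+z) = S^2*q^3*Y^2*Z" "q^(2*s+2+2*y+z) = S^2*q^2*Y^2*Z"
    unfolding P_def S_def Y_def Z_def D1_def D2_def D3_def Dq_def Dq2_def
    by (simp_all only: power_add[symmetric] power_mult[symmetric] power_Suc[symmetric] power_Suc2[symmetric]) (rule arg_cong[where f="\<lambda>x. 1 - x"] pow_cong, simp add: algebra_simps)+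
  have pW: "q^(s+y-1) = W" unfolding W_def ..
  have rel: "q*W = S*Y"
  proof -
    have "s + y = Suc (s + y - 1)" using sy by simp
    hence "q^(s+y) = q * q^(s+y-1)" by (metis power_Suc)
    thus ?thesis unfolding W_def S_def Y_def by (simp add: power_add)
  qed
  have e: "Suc s = s+1" "Suc (s+y) = s+1+y" "Suc (s+1) = s+2" by simp_all
  have nD: "D1 \<noteq> 0" "D2 \<noteq> 0" "Dq \<noteq> 0" "Dq2 \<noteq> 0" "D3 \<noteq> 0"
    unfolding p(2,6,8,9,1)[symmetric]
    using qok_ne[OF q, of s] qok_ne'[OF q, of "s+2"] qok_ne[OF q, of 0] qok_ne[OF q, of 1] qok_ne[OF q, of "s+1+y+z"] by (auto simp: power2_eq_square)
  have gA1: "gb q (Suc (s+1+y+z)) (s+1) = A * D3 / D1"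
    using gb_L2[OF q, of "s+1+y+z" s] unfolding A_def p e .
  have gA2: "gb q (s+1+y+z) (s+1) = A * (1 - q*Y*Z) / D1"
    using gb_L1[OF q, of "s+1+y+z" s] unfolding A_def p e .
  have gA3: "gb q (Suc (s+1+y+z)) (s+2) = A * D3 / D1 * (1 - q*Y*Z) / D2"
    using gb_L1[OF q, of "Suc (s+1+y+z)" "s+1"] unfolding gA1 p e .
  have gB1: "gb q (s+1+y) (s+1) = B * (1 - q*S*Y) / D1"
    using gb_L2[OF q, of "s+y" s] unfolding B_def p e .
  have gB2: "gb q (s+y) (s+1) = B * (1 - Y) / D1"
    using gb_L1[OF q, of "s+y" s] unfolding B_def p e .
  have c0: "C2 q (s+1+y+z) (s+1+y) (s+3) = P*S^4*q^7*Y*((1-q*Z)*(1-S*Y)*(1-q*S*Y*Z))/(D2*Dq*Dq2)*(A*D3/D1)*(B*(1-q*S*Y)/D1)"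
  proof -
    have raw: "C2 q (s+1+y+z) (s+1+y) (s+3) = q^((s+1)*(s+2)+(s+1+y)+4) * ((1 - q^(Suc z)) * (1 - q^(s+y)) * (1 - q^(s+1+y+z))) / ((1 - q^(s+2)) * (1 - q) * (1 - q^2)) * gb q (Suc (s+1+y+z)) (s+1) * gb q (s+1+y) (s+1)"
      by (simp add: C2_def)
    show ?thesis by (simp only: raw gA1 gB1 p pW)
  qed
  have c1: "C2 q (s+y+z) (s+1+y) (s+3) = P*S^4*q^7*Y*((1-Z)*(1-S*Y)*(1-S*Y*Z))/(D2*Dq*Dq2)*(A*(1-q*Y*Z)/D1)*(B*(1-q*S*Y)/D1)"
  proof -
    have raw: "C2 q (s+y+z) (s+1+y) (s+3) = q^((s+1)*(s+2)+(s+1+y)+4) * ((1 - q^z) * (1 - q^(s+y)) * (1 - q^(s+y+z))) / ((1 - q^(s+2)) * (1 - q) * (1 - q^2)) * gb q (s+1+y+z) (s+1) * gb q (s+1+y) (s+1)"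
      by (simp add: C2_def)
    show ?thesis by (simp only: raw gA2 gB1 p pW)
  qed
  have c2: "C2 q (s+1+y+z) (s+y) (s+3) = P*S^4*q^6*Y*((1-q^2*Z)*(1-W)*(1-q*S*Y*Z))/(D2*Dq*Dq2)*(A*D3/D1)*(B*(1-Y)/D1)"
  proof -
    have raw: "C2 q (s+1+y+z) (s+y) (s+3) = q^((s+1)*(s+2)+(s+y)+4) * ((1 - q^(Suc (Suc z))) * (1 - q^(s+y-1)) * (1 - q^(s+1+y+z))) / ((1 - q^(s+2)) * (1 - q) * (1 - q^2)) * gb q (Suc (s+1+y+z)) (s+1) * gb q (s+y) (s+1)"
      by (simp add: C2_def)
    show ?thesis by (simp only: raw gA1 gB2 p pW)
  qed
  have c3: "C2 q (s+y+z) (s+y) (s+3) = P*S^4*q^6*Y*((1-q*Z)*(1-W)*(1-S*Y*Z))/(D2*Dq*Dq2)*(A*(1-q*Y*Z)/D1)*(B*(1-Y)/D1)"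
  proof -
    have raw: "C2 q (s+y+z) (s+y) (s+3) = q^((s+1)*(s+2)+(s+y)+4) * ((1 - q^(Suc z)) * (1 - q^(s+y-1)) * (1 - q^(s+y+z))) / ((1 - q^(s+2)) * (1 - q) * (1 - q^2)) * gb q (s+1+y+z) (s+1) * gb q (s+y) (s+1)"
      by (simp add: C2_def)
    show ?thesis by (simp only: raw gA2 gB2 p pW)
  qed
  have c4: "C2 q (s+y+z) (s+y) (s+2) = P*S^2*q^4*Y*((1-q*Z)*(1-W)*(1-S*Y*Z))/(D1*Dq*Dq2)*A*B"
  proof -
    have raw: "C2 q (s+y+z) (s+y) (s+2) = q^(s*(s+1)+(s+y)+4) * ((1 - q^(Suc z)) * (1 - q^(s+y-1)) * (1 - q^(s+y+z))) / ((1 - q^(s+1)) * (1 - q) * (1 - q^2)) * gb q (s+1+y+z) s * gb q (s+y) s"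
      by (simp add: C2_def)
    show ?thesis by (simp only: raw A_def[symmetric] B_def[symmetric] p pW)
  qed
  have c5: "C0 q (s+1+y+z) (s+1+y) (s+2) = P*S^4*q^3*Y*(1-q*Z)/D3*(A*D3/D1*(1-q*Y*Z)/D2)*(B*(1-Y)/D1)"
  proof -
    have raw: "C0 q (s+1+y+z) (s+1+y) (s+2) = q^((s+2)*(s+1)+(s+1+y)) * (1 - q^(Suc z)) / (1 - q^(Suc (s+1+y+z))) * gb q (Suc (s+1+y+z)) (s+2) * gb q (s+y) (s+1)"
      by (simp add: C0_def)
    show ?thesis by (simp only: raw gA3 gB2 p pW)
  qed
  have c6: "C1 q (s+1+y+z) (s+1+y) (s+2) = P*S^3*q^3*Y*D1*(1-q*Z)/(D2*Dq)*(A*D3/D1)*(B*(1-q*S*Y)/D1)"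
  proof -
    have raw: "C1 q (s+1+y+z) (s+1+y) (s+2) = q^((s+1)*(s+1)+(s+1+y)+1) * (1 - q^(s+1)) * (1 - q^(Suc z)) / ((1 - q^(s+2)) * (1 - q)) * gb q (Suc (s+1+y+z)) (s+1) * gb q (s+1+y) (s+1)"
      by (simp add: C1_def)
    show ?thesis by (simp only: raw gA1 gB1 p pW)
  qed
  have c7: "C0 q (s+1+y+z) (s+1+y) (s+1) = P*S^2*q*Y*(1-q*Z)/D3*(A*D3/D1)*B"
  proof -
    have raw: "C0 q (s+1+y+z) (s+1+y) (s+1) = q^((s+1)*s+(s+1+y)) * (1 - q^(Suc z)) / (1 - q^(Suc (s+1+y+z))) * gb q (Suc (s+1+y+z)) (s+1) * gb q (s+y) s"
      by (simp add: C0_def)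
    show ?thesis by (simp only: raw gA1 B_def[symmetric] p pW)
  qed
  define f where "f = A*B*P*Y*S^4*q^5"
  define Dl where "Dl = D1*D1*D2*Dq*Dq2"
  have t0: "P*S^4*q^7*Y*((1-q*Z)*(1-S*Y)*(1-q*S*Y*Z))/(D2*Dq*Dq2)*(A*D3/D1)*(B*(1-q*S*Y)/D1) = f * (q^2*(1-q*Z)*(1-S*Y)*(1-q*S*Y*Z)*D3*(1-q*S*Y)) / Dl"
    unfolding f_def Dl_def using nD by (simp add: field_simps, algebra?)
  have t1: "P*S^4*q^7*Y*((1-Z)*(1-S*Y)*(1-S*Y*Z))/(D2*Dq*Dq2)*(A*(1-q*Y*Z)/D1)*(B*(1-q*S*Y)/D1) = f * (q^2*(1-Z)*(1-S*Y)*(1-S*Y*Z)*(1-q*Y*Z)*(1-q*S*Y)) / Dl"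
    unfolding f_def Dl_def using nD by (simp add: field_simps, algebra?)
  have t2: "P*S^4*q^6*Y*((1-q^2*Z)*(1-W)*(1-q*S*Y*Z))/(D2*Dq*Dq2)*(A*D3/D1)*(B*(1-Y)/D1) = f * ((q*(1-W))*(1-q^2*Z)*(1-q*S*Y*Z)*D3*(1-Y)) / Dl"
    unfolding f_def Dl_def using nD by (simp add: field_simps, algebra?)
  have t3: "P*S^4*q^6*Y*((1-q*Z)*(1-W)*(1-S*Y*Z))/(D2*Dq*Dq2)*(A*(1-q*Y*Z)/D1)*(B*(1-Y)/D1) = f * ((q*(1-W))*(1-q*Z)*(1-S*Y*Z)*(1-q*Y*Z)*(1-Y)) / Dl"
    unfolding f_def Dl_def using nD by (simp add: field_simps, algebra?)
  have t4: "S^2*q^3*Y^2*Z*(P*S^2*q^4*Y*((1-q*Z)*(1-W)*(1-S*Y*Z))/(D1*Dq*Dq2)*A*B) = f * (q*(q*(1-W))*Y^2*Z*(1-q*Z)*(1-S*Y*Z)*D1*D2) / Dl"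
    unfolding f_def Dl_def using nD by (simp add: field_simps, algebra?)
  have t5: "S^2*q^2*Y^2*Z*(P*S^4*q^3*Y*(1-q*Z)/D3*(A*D3/D1*(1-q*Y*Z)/D2)*(B*(1-Y)/D1)) = f * (S^2*Y^2*Z*(1-q*Z)*(1-q*Y*Z)*(1-Y)*Dq*Dq2) / Dl"
    unfolding f_def Dl_def using nD by (simp add: field_simps, algebra?)
  have t6: "S^2*q^3*Y^2*Z*(P*S^3*q^3*Y*D1*(1-q*Z)/(D2*Dq)*(A*D3/D1)*(B*(1-q*S*Y)/D1)) = f * (S*q*Y^2*Z*(1-q*Z)*D3*(1-q*S*Y)*D1*Dq2) / Dl"
    unfolding f_def Dl_def using nD by (simp add: field_simps, algebra?)
  have t7: "S^2*q^3*Y^2*Z*(S^2*q^2*Y^2*Z*(P*S^2*q*Y*(1-q*Z)/D3*(A*D3/D1)*B)) = f * (S^2*q*Y^4*Z^2*(1-q*Z)*D1*D2*Dq*Dq2) / Dl"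
    unfolding f_def Dl_def using nD by (simp add: field_simps, algebra?)
  have t67: "S^2*q^3*Y^2*Z*(P*S^3*q^3*Y*D1*(1-q*Z)/(D2*Dq)*(A*D3/D1)*(B*(1-q*S*Y)/D1) - S^2*q^2*Y^2*Z*(P*S^2*q*Y*(1-q*Z)/D3*(A*D3/D1)*B)) = f * (S*q*Y^2*Z*(1-q*Z)*D3*(1-q*S*Y)*D1*Dq2) / Dl - f * (S^2*q*Y^4*Z^2*(1-q*Z)*D1*D2*Dq*Dq2) / Dl"
    by (subst right_diff_distrib) (simp only: t6 t7)
  have qW: "q*(1-W) = q - S*Y" using rel by (simp add: algebra_simps)
  have N: "q^2*(1-q*Z)*(1-S*Y)*(1-q*S*Y*Z)*D3*(1-q*S*Y) = q^2*(1-Z)*(1-S*Y)*(1-S*Y*Z)*(1-q*Y*Z)*(1-q*S*Y) + (q*(1-W))*(1-q^2*Z)*(1-q*S*Y*Z)*D3*(1-Y) - (q*(1-W))*(1-q*Z)*(1-S*Y*Z)*(1-q*Y*Z)*(1-Y) + (q*(q*(1-W))*Y^2*Z*(1-q*Z)*(1-S*Y*Z)*D1*D2 + S^2*Y^2*Z*(1-q*Z)*(1-q*Y*Z)*(1-Y)*Dq*Dq2 + (S*q*Y^2*Z*(1-q*Z)*D3*(1-q*S*Y)*D1*Dq2 - S^2*q*Y^4*Z^2*(1-q*Z)*D1*D2*Dq*Dq2))"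
    unfolding qW D1_def D2_def D3_def Dq_def Dq2_def by algebra
  have "f * (q^2*(1-q*Z)*(1-S*Y)*(1-q*S*Y*Z)*D3*(1-q*S*Y)) / Dl = f * (q^2*(1-Z)*(1-S*Y)*(1-S*Y*Z)*(1-q*Y*Z)*(1-q*S*Y)) / Dl + f * ((q*(1-W))*(1-q^2*Z)*(1-q*S*Y*Z)*D3*(1-Y)) / Dl - f * ((q*(1-W))*(1-q*Z)*(1-S*Y*Z)*(1-q*Y*Z)*(1-Y)) / Dl
     + (f * (q*(q*(1-W))*Y^2*Z*(1-q*Z)*(1-S*Y*Z)*D1*D2) / Dl + f * (S^2*Y^2*Z*(1-q*Z)*(1-q*Y*Z)*(1-Y)*Dq*Dq2) / Dl + (f * (S*q*Y^2*Z*(1-q*Z)*D3*(1-q*S*Y)*D1*Dq2) / Dl - f * (S^2*q*Y^4*Z^2*(1-q*Z)*D1*D2*Dq*Dq2) / Dl))"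
    unfolding N by (simp add: add_divide_distrib diff_divide_distrib algebra_simps)
  thus ?thesis unfolding c0 c1 c2 c3 c4 c5 c6 c7 p(25,26) t0 t1 t2 t3 t4 t5 t67 .
qed


lemma E2_two:
  assumes q: "qok q"
  shows "C2 q (t+2+z) (t+2) 2 = C2 q (t+1+z) (t+2) 2 + C2 q (t+2+z) (t+1) 2 - C2 q (t+1+z) (t+1) 2
     + (q^(2*t+5+z) * C2 q (t+1+z) (t+1) 1 + q^(2*t+4+z) * C0 q (t+2+z) (t+2) 1
     + q^(2*t+5+z) * (C1 q (t+2+z) (t+2) 1 - q^(2*t+4+z) * C0 q (t+2+z) (t+2) 0))"
proof -
  define T where "T = q^t"
  define Z where "Z = q^z"
  define Dq where "Dq = 1 - q"
  define Dq2 where "Dq2 = 1 - q^2"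
  define D where "D = Dq * Dq * Dq2"
  have p: "q^(t+6) = q^6*T" "q^(t+5) = q^5*T" "q^(Suc z) = q*Z" "q^(Suc (Suc z)) = q^2*Z" "q^z = Z"
    "q^(Suc t) = q*T" "q^t = T" "q^(t+2+z) = q^2*T*Z" "q^(t+1+z) = q*T*Z" "q^(2*t+4+z) = T^2*q^4*Z"
    "q^(t+2) = q^2*T"
    unfolding T_def Z_def
    by (simp_all only: power_add[symmetric] power_mult[symmetric] power_Suc[symmetric] power_Suc2[symmetric]) (rule pow_cong, simp add: algebra_simps)+
  have nD: "Dq \<noteq> 0" "Dq2 \<noteq> 0" "D \<noteq> 0"
    unfolding D_def Dq_def Dq2_def using qok_ne[OF q, of 0] qok_ne[OF q, of 1] by (auto simp: power2_eq_square)
  have x0: "C2 q (t+2+z) (t+2) 2 = q^6*T*((1-q*Z)*(1-q*T)*(1-q^2*T*Z))/D"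
  proof -
    have raw: "C2 q (t+2+z) (t+2) 2 = q^(t+6)*((1-q^(Suc z))*(1-q^(Suc t))*(1-q^(t+2+z)))/((1-q)*(1-q)*(1-q^2))"
      by (simp add: C2_def gb_m0[OF q] add.commute)
    show ?thesis unfolding D_def Dq_def Dq2_def by (simp only: raw p)
  qed
  have x1: "C2 q (t+1+z) (t+2) 2 = q^6*T*((1-Z)*(1-q*T)*(1-q*T*Z))/D"
  proof -
    have raw: "C2 q (t+1+z) (t+2) 2 = q^(t+6)*((1-q^z)*(1-q^(Suc t))*(1-q^(t+1+z)))/((1-q)*(1-q)*(1-q^2))"
      by (simp add: C2_def gb_m0[OF q] add.commute)
    show ?thesis unfolding D_def Dq_def Dq2_def by (simp only: raw p)
  qed
  have x2: "C2 q (t+2+z) (t+1) 2 = q^5*T*((1-q^2*Z)*(1-T)*(1-q^2*T*Z))/D"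
  proof -
    have raw: "C2 q (t+2+z) (t+1) 2 = q^(t+5)*((1-q^(Suc (Suc z)))*(1-q^t)*(1-q^(t+2+z)))/((1-q)*(1-q)*(1-q^2))"
      by (simp add: C2_def gb_m0[OF q] add.commute)
    show ?thesis unfolding D_def Dq_def Dq2_def by (simp only: raw p)
  qed
  have x3: "C2 q (t+1+z) (t+1) 2 = q^5*T*((1-q*Z)*(1-T)*(1-q*T*Z))/D"
  proof -
    have raw: "C2 q (t+1+z) (t+1) 2 = q^(t+5)*((1-q^(Suc z))*(1-q^t)*(1-q^(t+1+z)))/((1-q)*(1-q)*(1-q^2))"
      by (simp add: C2_def gb_m0[OF q] add.commute)
    show ?thesis unfolding D_def Dq_def Dq2_def by (simp only: raw p)
  qed
  have x5: "C0 q (t+2+z) (t+2) 1 = q^2*T*(1-q*Z)/Dq"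
  proof -
    have n: "1 - q^(Suc (t+2+z)) \<noteq> 0" by (rule qok_ne[OF q])
    have raw: "C0 q (t+2+z) (t+2) 1 = q^(t+2)*(1-q^(Suc z))/(1-q)"
      using n by (simp add: C0_def gb_m0[OF q] gb_1[OF q] del: power_Suc)
    show ?thesis unfolding Dq_def by (simp only: raw p)
  qed
  have x0s: "C2 q (t+1+z) (t+1) 1 = 0" "C1 q (t+2+z) (t+2) 1 = 0" "C0 q (t+2+z) (t+2) 0 = 0"
    by (simp_all add: C2_def C1_def C0_def)
  have N: "q^6*T*((1-q*Z)*(1-q*T)*(1-q^2*T*Z)) = q^6*T*((1-Z)*(1-q*T)*(1-q*T*Z)) + q^5*T*((1-q^2*Z)*(1-T)*(1-q^2*T*Z))
     - q^5*T*((1-q*Z)*(1-T)*(1-q*T*Z)) + T^2*q^4*Z*(q^2*T*(1-q*Z))*(Dq*Dq2)"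
    unfolding Dq_def Dq2_def by algebra
  have "q^6*T*((1-q*Z)*(1-q*T)*(1-q^2*T*Z))/D = q^6*T*((1-Z)*(1-q*T)*(1-q*T*Z))/D + q^5*T*((1-q^2*Z)*(1-T)*(1-q^2*T*Z))/D
     - q^5*T*((1-q*Z)*(1-T)*(1-q*T*Z))/D + (q^(2*t+5+z) * 0 + T^2*q^4*Z * (q^2*T*(1-q*Z)/Dq) + q^(2*t+5+z) * (0 - T^2*q^4*Z * 0))"
  proof -
    have "T^2*q^4*Z * (q^2*T*(1-q*Z)/Dq) = T^2*q^4*Z*(q^2*T*(1-q*Z))*(Dq*Dq2)/D"
      using nD unfolding D_def by (simp add: field_simps)
    thus ?thesis unfolding N by (simp add: add_divide_distrib diff_divide_distrib)
  qed
  thus ?thesis unfolding x0 x1 x2 x3 x5 x0s p .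
qed

lemma E2:
  assumes q: "qok q" and b: "2 \<le> b" "b \<le> a"
  shows "C2 q a b i = C2 q (a-1) b i + C2 q a (b-1) i - C2 q (a-1) (b-1) i
     + (if 1 \<le> i then q^(a+b+1) * C2 q (a-1) (b-1) (i-1) + q^(a+b) * C0 q a b (i-1)
         + q^(a+b+1) * (C1 q a b (i-1) - (if 2 \<le> i then q^(a+b) * C0 q a b (i-2) else 0)) else 0)"
proof -
  consider "i = 0" | "i = 1" | "i = 2" | "3 \<le> i" "b + 2 < i" | "3 \<le> i" "i \<le> b + 2"
    using b by linarith
  then show ?thesis
  proof cases
    case 1 thus ?thesis using b by (simp add: C2_def)
  next
    case 2 thus ?thesis using b by (simp add: C2_def C1_def C0_def)
  next
    case 3
    define t where "t = b - 2"
    define z where "z = a - b"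
    have tz: "b = t + 2" "a = t + 2 + z" using b unfolding t_def z_def by auto
    have e: "a + b + 1 = 2*t+5+z" "a + b = 2*t+4+z" "a - 1 = t+1+z" "b - 1 = t + 1" using tz by auto
    show ?thesis unfolding e using E2_two[OF q, of t z] tz 3 by (simp add: ac_simps)
  next
    case 4 thus ?thesis using b by (simp add: C2_def C1_def C0_def gb_big)
  next
    case 5
    define s where "s = i - 3"
    define y where "y = b - 1 - s"
    define z where "z = a - b"
    have syz: "i = s + 3" "b = s + 1 + y" "a = s + 1 + y + z" "1 \<le> s + y" using 5 b unfolding s_def y_def z_def by auto
    have e: "a + b + 1 = 2*s+3+2*y+z" "a + b = 2*s+2+2*y+z" "a - 1 = s+y+z" "b - 1 = s+y" "i - 1 = s + 2" "i - 2 = s + 1"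
      using syz by auto
    have c: "(1 \<le> i) = True" "(2 \<le> i) = True" using syz by auto
    show ?thesis unfolding e(1) unfolding e(2-6) c if_True unfolding syz(1,2,3) by (rule E2_generic[OF q syz(4), of z])
  qed
qed


lemma sum_rows:
  assumes R: "R \<subseteq> {..<length lam}" and N: "1 \<le> sum_list lam"
  shows "(\<Sum>r\<in>R. Gp lam r j q) =
    (\<Sum>T\<in>{T \<in> SYT lam. des lam T = j \<and> row_of lam T (sum_list lam) \<in> R}. q ^ maj lam T)"
proof -
  let ?S = "{T \<in> SYT lam. des lam T = j \<and> row_of lam T (sum_list lam) \<in> R}"
  have fR: "finite R" using R finite_subset by blast
  have "(\<Sum>r\<in>R. sum (\<lambda>T. q ^ maj lam T) {T \<in> ?S. row_of lam T (sum_list lam) = r}) = sum (\<lambda>T. q ^ maj lam T) ?S"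
    by (rule sum.group) (use SYT_finite fR in auto)
  moreover have "\<And>r. r \<in> R \<Longrightarrow> {T \<in> ?S. row_of lam T (sum_list lam) = r} =
     {T \<in> SYT lam. des lam T = j \<and> row_of lam T (sum_list lam) = r}" by auto
  ultimately show ?thesis unfolding Gp_def by simp
qed

lemma G_rec2:
  assumes v: "valid lam r" and N: "2 \<le> sum_list lam"
  shows "Gp lam r i q = (\<Sum>r'\<in>{r..<length lam}. Gp (dec lam r) r' i q)
     + (if 1 \<le> i then q ^ (sum_list lam - 1) * (\<Sum>r'\<in>{..<r}. Gp (dec lam r) r' (i - 1) q) else 0)"
proof -
  let ?l = "dec lam r" and ?N = "sum_list lam"
  have sd: "sum_list ?l = ?N - 1" by (rule sum_dec[OF v])
  have len: "length ?l = length lam" by (simp add: dec_def)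
  have rl: "r < length lam" using v by (simp add: valid_def)
  have N1: "1 \<le> sum_list ?l" using sd N by simp
  have rowlt: "\<And>T. T \<in> SYT ?l \<Longrightarrow> row_of ?l T (?N - 1) < length lam"
    using row_of_lt[of _ ?l "?N - 1"] sd N len by simp
  define S1 where "S1 = {T' \<in> SYT ?l. des ?l T' = i \<and> row_of ?l T' (sum_list ?l) \<in> {r..<length lam}}"
  define S2 where "S2 = {T' \<in> SYT ?l. des ?l T' + 1 = i \<and> row_of ?l T' (sum_list ?l) \<in> {..<r}}"
  have split: "{T' \<in> SYT ?l. des ?l T' + (if 2 \<le> ?N \<and> row_of ?l T' (?N - 1) < r then 1 else 0) = i} = S1 \<union> S2"
    unfolding S1_def S2_def sd using N rowlt by (auto split: if_splits)
  have disj: "S1 \<inter> S2 = {}" unfolding S1_def S2_def by auto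
  have fin: "finite S1" "finite S2" unfolding S1_def S2_def using SYT_finite by auto
  have "Gp lam r i q = (\<Sum>T'\<in>S1 \<union> S2. q ^ (maj ?l T' + (if 2 \<le> ?N \<and> row_of ?l T' (?N - 1) < r then ?N - 1 else 0)))"
    unfolding G_rec[OF v] split ..
  also have "\<dots> = (\<Sum>T'\<in>S1. q ^ maj ?l T') + (\<Sum>T'\<in>S2. q ^ (?N - 1) * q ^ maj ?l T')"
    unfolding sum.union_disjoint[OF fin disj]
    by (intro arg_cong2[where f="(+)"] sum.cong) (auto simp: S1_def S2_def sd N power_add mult.commute)
  also have "(\<Sum>T'\<in>S1. q ^ maj ?l T') = (\<Sum>r'\<in>{r..<length lam}. Gp ?l r' i q)"
    unfolding S1_def by (rule sum_rows[symmetric]) (use len N1 in auto)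
  also have "(\<Sum>T'\<in>S2. q ^ (?N - 1) * q ^ maj ?l T') =
      (if 1 \<le> i then q ^ (?N - 1) * (\<Sum>r'\<in>{..<r}. Gp ?l r' (i - 1) q) else 0)"
  proof (cases "1 \<le> i")
    case True
    have "S2 = {T' \<in> SYT ?l. des ?l T' = i - 1 \<and> row_of ?l T' (sum_list ?l) \<in> {..<r}}"
      unfolding S2_def using True by auto
    hence "(\<Sum>T'\<in>S2. q ^ maj ?l T') = (\<Sum>r'\<in>{..<r}. Gp ?l r' (i - 1) q)"
      using sum_rows[of "{..<r}" ?l "i - 1" q] len N1 rl by auto
    moreover have "(\<Sum>T'\<in>S2. q ^ (?N - 1) * q ^ maj ?l T') = q ^ (?N - 1) * (\<Sum>T'\<in>S2. q ^ maj ?l T')"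
      by (rule sum_distrib_left[symmetric])
    ultimately show ?thesis using True by simp
  next
    case False
    hence "S2 = {}" unfolding S2_def by auto
    thus ?thesis using False by simp
  qed
  finally show ?thesis .
qed


lemma valid3: "valid [a,b,c] 0 \<longleftrightarrow> 0 < a \<and> b < a" "valid [a,b,c] 1 \<longleftrightarrow> 0 < b \<and> c < b"
  "valid [a,b,c] 2 \<longleftrightarrow> 0 < c"
  by (auto simp: valid_def numeral_2_eq_2)

lemma dec3: "dec [a,b,c] 0 = [a-1,b,c]" "dec [a,b,c] 1 = [a,b-1,c]" "dec [a,b,c] 2 = [a,b,c-1]"
  by (auto simp: dec_def numeral_2_eq_2)

lemma F3: "1 \<le> a + b + c \<Longrightarrow> fpoly [a,b,c] i q = Gp [a,b,c] 0 i q + Gp [a,b,c] 1 i q + Gp [a,b,c] 2 i q"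
  using F_split[of "[a,b,c]" i q] by (simp add: numeral_3_eq_3 numeral_2_eq_2 lessThan_Suc)

lemma G0_3: assumes "1 \<le> a + b + c"
  shows "Gp [a,b,c] 0 i q = (if 0 < a \<and> b < a then fpoly [a-1,b,c] i q else 0)"
proof (cases "0 < a \<and> b < a")
  case True
  hence v: "valid [a,b,c] 0" by (simp add: valid3)
  show ?thesis using True unfolding G_rec[OF v] dec3 fpoly_def by simp
next
  case False
  thus ?thesis using G_invalid[of "[a,b,c]" 0 i q] assms by (auto simp: valid3)
qed

lemma G1_3: assumes "2 \<le> a + b + c" "0 < b" "c < b"
  shows "Gp [a,b,c] 1 i q = Gp [a,b-1,c] 1 i q + Gp [a,b-1,c] 2 i q
     + (if 1 \<le> i then q ^ (a+b+c-1) * Gp [a,b-1,c] 0 (i-1) q else 0)"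
proof -
  have v: "valid [a,b,c] 1" using assms by (auto simp: valid_def numeral_2_eq_2)
  have e: "{1..<length [a,b,c]} = {1, 2}" "{..<(1::nat)} = {0}" by auto
  show ?thesis using G_rec2[OF v, of i q] assms unfolding e dec3 by (simp add: add.assoc)
qed

lemma G2_3: assumes "2 \<le> a + b + c" "0 < c"
  shows "Gp [a,b,c] 2 i q = Gp [a,b,c-1] 2 i q
     + (if 1 \<le> i then q ^ (a+b+c-1) * (Gp [a,b,c-1] 0 (i-1) q + Gp [a,b,c-1] 1 (i-1) q) else 0)"
proof -
  have v: "valid [a,b,c] 2" using assms by (auto simp: valid_def numeral_2_eq_2)
  have e: "{2..<length [a,b,c]} = {2}" "{..<(2::nat)} = {0, 1}" by auto
  show ?thesis using G_rec2[OF v, of i q] assms unfolding e dec3 by (simp add: add.assoc)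
qed

lemma G_inv3: "1 \<le> a + b + c \<Longrightarrow> \<not> valid [a,b,c] r \<Longrightarrow> Gp [a,b,c] r i q = 0"
  using G_invalid[of "[a,b,c]" r] by simp


lemma F000: "fpoly [0,0,0] i (q::complex) = (if i = 0 then 1 else 0)"
proof -
  have c: "cells [0,0,0] = {}" by (auto simp: cells_def nth_Cons split: nat.splits)
  have S: "SYT [0,0,0] = {\<lambda>_. 0}" unfolding SYT_def c by (auto simp: fun_eq_iff bij_betw_def)
  have d: "descents [0,0,0] (\<lambda>_. 0) = {}" by (auto simp: descents_def)
  have dd: "des [0,0,0] (\<lambda>_. 0) = 0" "maj [0,0,0] (\<lambda>_. 0) = 0" by (simp_all add: des_def maj_def d)
  have "{T \<in> {(\<lambda>_. 0)::nat\<times>nat\<Rightarrow>nat}. des [0,0,0] T = i} = (if i = 0 then {\<lambda>_. 0} else {})"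
    using dd by auto
  thus ?thesis unfolding fpoly_def S using dd by simp
qed

lemma FA00: "fpoly [a,0,0] i (q::complex) = (if i = 0 then 1 else 0)"
proof (induction a)
  case 0 thus ?case by (rule F000)
next
  case (Suc a)
  have "fpoly [Suc a,0,0] i q = Gp [Suc a,0,0] 0 i q + Gp [Suc a,0,0] 1 i q + Gp [Suc a,0,0] 2 i q"
    by (rule F3) simp
  moreover have "Gp [Suc a,0,0] 1 i q = 0" "Gp [Suc a,0,0] 2 i q = 0"
    by (rule G_inv3, simp, simp add: valid_def numeral_2_eq_2)+
  moreover have "Gp [Suc a,0,0] 0 i q = fpoly [a,0,0] i q" using G0_3[of "Suc a" 0 0 i q] by simp
  ultimately show ?case using Suc by simp
qed

lemma FR0:
  assumes "1 \<le> b" "b \<le> a"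
  shows "fpoly [a,b,0] i (q::complex) = (if b < a then fpoly [a-1,b,0] i q else 0) + fpoly [a,b-1,0] i q - fpoly [a-1,b-1,0] i q
    + (if 1 \<le> i then q^(a+b-1) * fpoly [a-1,b-1,0] (i-1) q else 0)"
proof -
  have f: "fpoly [a,b,0] i q = Gp [a,b,0] 0 i q + Gp [a,b,0] 1 i q + Gp [a,b,0] 2 i q"
    by (rule F3) (use assms in simp)
  have g2: "Gp [a,b,0] 2 i q = 0" by (rule G_inv3) (use assms in \<open>simp_all add: valid_def numeral_2_eq_2\<close>)
  have g0: "Gp [a,b,0] 0 i q = (if b < a then fpoly [a-1,b,0] i q else 0)"
    using G0_3[of a b 0 i q] assms by auto
  have g1: "Gp [a,b,0] 1 i q = Gp [a,b-1,0] 1 i q + Gp [a,b-1,0] 2 i q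
     + (if 1 \<le> i then q ^ (a+b+0-1) * Gp [a,b-1,0] 0 (i-1) q else 0)"
    by (rule G1_3) (use assms in auto)
  have fm: "fpoly [a,b-1,0] i q = Gp [a,b-1,0] 0 i q + Gp [a,b-1,0] 1 i q + Gp [a,b-1,0] 2 i q"
    by (rule F3) (use assms in simp)
  have h0: "\<And>j. Gp [a,b-1,0] 0 j q = fpoly [a-1,b-1,0] j q"
    using G0_3[of a "b-1" 0 _ q] assms by auto
  show ?thesis using f g0 g1 g2 fm h0[of i] h0[of "i-1"] by (simp add: algebra_simps)
qed


lemma G21:
  assumes "1 \<le> b" "b \<le> a"
  shows "Gp [a,b,1] 2 j (q::complex) = (if 1 \<le> j then q^(a+b) * fpoly [a,b,0] (j-1) q else 0)"
proof -
  have g: "Gp [a,b,1] 2 j q = Gp [a,b,0] 2 j q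
     + (if 1 \<le> j then q ^ (a+b+1-1) * (Gp [a,b,0] 0 (j-1) q + Gp [a,b,0] 1 (j-1) q) else 0)"
    using G2_3[of a b 1 j q] assms by simp
  have z: "\<And>j. Gp [a,b,0] 2 j q = 0" by (rule G_inv3) (use assms in \<open>simp_all add: valid_def numeral_2_eq_2\<close>)
  have f: "fpoly [a,b,0] (j-1) q = Gp [a,b,0] 0 (j-1) q + Gp [a,b,0] 1 (j-1) q + Gp [a,b,0] 2 (j-1) q"
    by (rule F3) (use assms in simp)
  show ?thesis using g z f by simp
qed

lemma FR1:
  assumes "1 \<le> b" "b \<le> a"
  shows "fpoly [a,b,1] i (q::complex) = (if b < a then fpoly [a-1,b,1] i q else 0)
    + (if 1 < b then fpoly [a,b-1,1] i q - fpoly [a-1,b-1,1] i q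
         + (if 1 \<le> i then q^(a+b) * fpoly [a-1,b-1,1] (i-1) q else 0) else 0)
    + (if 1 \<le> i then q^(a+b) * fpoly [a,b,0] (i-1) q else 0)"
proof -
  have f: "fpoly [a,b,1] i q = Gp [a,b,1] 0 i q + Gp [a,b,1] 1 i q + Gp [a,b,1] 2 i q"
    by (rule F3) (use assms in simp)
  have g0: "Gp [a,b,1] 0 i q = (if b < a then fpoly [a-1,b,1] i q else 0)"
    using G0_3[of a b 1 i q] assms by auto
  have g2: "Gp [a,b,1] 2 i q = (if 1 \<le> i then q^(a+b) * fpoly [a,b,0] (i-1) q else 0)"
    by (rule G21[OF assms])
  have g1: "Gp [a,b,1] 1 i q = (if 1 < b then fpoly [a,b-1,1] i q - fpoly [a-1,b-1,1] i q
         + (if 1 \<le> i then q^(a+b) * fpoly [a-1,b-1,1] (i-1) q else 0) else 0)"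
  proof (cases "1 < b")
    case True
    have g: "Gp [a,b,1] 1 i q = Gp [a,b-1,1] 1 i q + Gp [a,b-1,1] 2 i q
       + (if 1 \<le> i then q ^ (a+b+1-1) * Gp [a,b-1,1] 0 (i-1) q else 0)"
      by (rule G1_3) (use assms True in auto)
    have fm: "fpoly [a,b-1,1] i q = Gp [a,b-1,1] 0 i q + Gp [a,b-1,1] 1 i q + Gp [a,b-1,1] 2 i q"
      by (rule F3) (use assms in simp)
    have h0: "\<And>j. Gp [a,b-1,1] 0 j q = fpoly [a-1,b-1,1] j q"
      using G0_3[of a "b-1" 1 _ q] assms by auto
    show ?thesis using True g fm h0[of i] h0[of "i-1"] by (simp add: algebra_simps)
  next
    case False
    thus ?thesis using G_inv3[of a b 1 1 i q] assms by (simp add: valid_def)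
  qed
  show ?thesis using f g0 g1 g2 by simp
qed

lemma FR2:
  assumes "2 \<le> b" "b \<le> a"
  shows "fpoly [a,b,2] i (q::complex) = (if b < a then fpoly [a-1,b,2] i q else 0)
    + (if 2 < b then fpoly [a,b-1,2] i q - fpoly [a-1,b-1,2] i q
         + (if 1 \<le> i then q^(a+b+1) * fpoly [a-1,b-1,2] (i-1) q else 0) else 0)
    + ((if 1 \<le> i then q^(a+b) * fpoly [a,b,0] (i-1) q else 0)
       + (if 1 \<le> i then q^(a+b+1) * (fpoly [a,b,1] (i-1) q
            - (if 2 \<le> i then q^(a+b) * fpoly [a,b,0] (i-2) q else 0)) else 0))"
proof -
  have f: "fpoly [a,b,2] i q = Gp [a,b,2] 0 i q + Gp [a,b,2] 1 i q + Gp [a,b,2] 2 i q"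
    by (rule F3) (use assms in simp)
  have g0: "Gp [a,b,2] 0 i q = (if b < a then fpoly [a-1,b,2] i q else 0)"
    using G0_3[of a b 2 i q] assms by auto
  have g1: "Gp [a,b,2] 1 i q = (if 2 < b then fpoly [a,b-1,2] i q - fpoly [a-1,b-1,2] i q
         + (if 1 \<le> i then q^(a+b+1) * fpoly [a-1,b-1,2] (i-1) q else 0) else 0)"
  proof (cases "2 < b")
    case True
    have g: "Gp [a,b,2] 1 i q = Gp [a,b-1,2] 1 i q + Gp [a,b-1,2] 2 i q
       + (if 1 \<le> i then q ^ (a+b+2-1) * Gp [a,b-1,2] 0 (i-1) q else 0)"
      by (rule G1_3) (use assms True in auto)
    have fm: "fpoly [a,b-1,2] i q = Gp [a,b-1,2] 0 i q + Gp [a,b-1,2] 1 i q + Gp [a,b-1,2] 2 i q"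
      by (rule F3) (use assms in simp)
    have h0: "\<And>j. Gp [a,b-1,2] 0 j q = fpoly [a-1,b-1,2] j q"
      using G0_3[of a "b-1" 2 _ q] assms by auto
    show ?thesis using True g fm h0[of i] h0[of "i-1"] by (simp add: algebra_simps)
  next
    case False
    thus ?thesis using G_inv3[of a b 2 1 i q] assms by (simp add: valid_def)
  qed
  have g2: "Gp [a,b,2] 2 i q = Gp [a,b,1] 2 i q
     + (if 1 \<le> i then q ^ (a+b+2-1) * (Gp [a,b,1] 0 (i-1) q + Gp [a,b,1] 1 (i-1) q) else 0)"
    using G2_3[of a b 2 i q] assms by simp
  have f1: "fpoly [a,b,1] (i-1) q = Gp [a,b,1] 0 (i-1) q + Gp [a,b,1] 1 (i-1) q + Gp [a,b,1] 2 (i-1) q"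
    by (rule F3) (use assms in simp)
  have b1: "1 \<le> b" using assms by simp
  have x: "Gp [a,b,1] 2 i q = (if 1 \<le> i then q^(a+b) * fpoly [a,b,0] (i-1) q else 0)"
    by (rule G21[OF b1 assms(2)])
  have y: "Gp [a,b,1] 2 (i-1) q = (if 1 \<le> i - 1 then q^(a+b) * fpoly [a,b,0] (i-1-1) q else 0)"
    by (rule G21[OF b1 assms(2)])
  have e: "i - 1 - 1 = i - 2" by simp
  show ?thesis using f g0 g1 g2 f1 x y unfolding e by (auto simp: algebra_simps)
qed


lemma C0_diag: "1 \<le> b \<Longrightarrow> C0 q (b-1) b i = 0" by (simp add: C0_def)
lemma C1_diag: "1 \<le> b \<Longrightarrow> C1 q (b-1) b i = 0" by (simp add: C1_def)
lemma C2_diag: "1 \<le> b \<Longrightarrow> C2 q (b-1) b i = 0" by (simp add: C2_def)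
lemma C1_b0: "C1 q a 0 i = 0"
  by (cases "i \<le> 1") (auto simp: C1_def gb_big)
lemma C2_b1: "C2 q a 1 i = 0" by (simp add: C2_def)

theorem F0_closed:
  assumes q: "qok q"
  shows "b \<le> a \<Longrightarrow> fpoly [a,b,0] i q = C0 q a b i"
proof (induction "a + b" arbitrary: a b i rule: less_induct)
  case less
  show ?case
  proof (cases "b = 0")
    case True thus ?thesis using FA00 by (simp add: C0_def)
  next
    case False
    hence b1: "1 \<le> b" by simp
    have IH1: "b < a \<Longrightarrow> fpoly [a-1,b,0] i q = C0 q (a-1) b i" using less b1 by auto
    have IH2: "fpoly [a,b-1,0] i q = C0 q a (b-1) i" using less b1 by auto
    have IH3: "\<And>j. fpoly [a-1,b-1,0] j q = C0 q (a-1) (b-1) j" using less b1 by auto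
    have d: "\<not> b < a \<Longrightarrow> C0 q (a-1) b i = 0" using less.prems b1 C0_diag[of b q i] by auto
    show ?thesis unfolding FR0[OF b1 less.prems] E0[OF q b1 less.prems]
      using IH1 IH2 IH3 d by auto
  qed
qed

theorem F1_closed:
  assumes q: "qok q"
  shows "1 \<le> b \<Longrightarrow> b \<le> a \<Longrightarrow> fpoly [a,b,1] i q = C1 q a b i"
proof (induction "a + b" arbitrary: a b i rule: less_induct)
  case less
  have IH1: "b < a \<Longrightarrow> fpoly [a-1,b,1] i q = C1 q (a-1) b i" using less by auto
  have IH2: "1 < b \<Longrightarrow> fpoly [a,b-1,1] i q = C1 q a (b-1) i" using less by auto
  have IH3: "\<And>j. 1 < b \<Longrightarrow> fpoly [a-1,b-1,1] j q = C1 q (a-1) (b-1) j" using less by auto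
  have d: "\<not> b < a \<Longrightarrow> C1 q (a-1) b i = 0" using less.prems C1_diag[of b q i] by auto
  have d2: "\<not> 1 < b \<Longrightarrow> C1 q a (b-1) i = 0 \<and> C1 q (a-1) (b-1) i = 0 \<and> C1 q (a-1) (b-1) (i-1) = 0"
    using less.prems C1_b0 by auto
  have F0: "fpoly [a,b,0] (i-1) q = C0 q a b (i-1)" using F0_closed[OF q] less.prems by auto
  show ?case unfolding FR1[OF less.prems] E1[OF q less.prems]
    using IH1 IH2 IH3 d d2 F0 by auto
qed

theorem F2_closed:
  assumes q: "qok q"
  shows "2 \<le> b \<Longrightarrow> b \<le> a \<Longrightarrow> fpoly [a,b,2] i q = C2 q a b i"
proof (induction "a + b" arbitrary: a b i rule: less_induct)
  case less
  have IH1: "b < a \<Longrightarrow> fpoly [a-1,b,2] i q = C2 q (a-1) b i" using less by auto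
  have IH2: "2 < b \<Longrightarrow> fpoly [a,b-1,2] i q = C2 q a (b-1) i" using less by auto
  have IH3: "\<And>j. 2 < b \<Longrightarrow> fpoly [a-1,b-1,2] j q = C2 q (a-1) (b-1) j" using less by auto
  have d: "\<not> b < a \<Longrightarrow> C2 q (a-1) b i = 0" using less.prems C2_diag[of b q i] by auto
  have d2: "\<not> 2 < b \<Longrightarrow> C2 q a (b-1) i = 0 \<and> C2 q (a-1) (b-1) i = 0 \<and> C2 q (a-1) (b-1) (i-1) = 0"
    using less.prems C2_b1 by auto
  have F0: "\<And>j. fpoly [a,b,0] j q = C0 q a b j" using F0_closed[OF q] less.prems by auto
  have F1: "\<And>j. fpoly [a,b,1] j q = C1 q a b j" using F1_closed[OF q] less.prems by auto
  show ?case unfolding FR2[OF less.prems] E2[OF q less.prems]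
    using IH1 IH2 IH3 d d2 F0 F1 by auto
qed


lemma gb_qbinom: "gb q m j = qbinom (int m) (int j) q"
  unfolding gb_def qbinom_def by (simp add: nat_diff_distrib' of_nat_diff)

theorem mainTheorem5:
  fixes n k i :: nat and q :: complex
  assumes "2 \<le> k" and "k \<le> n" and "2 \<le> i"
    and "\<forall>m::nat. m \<ge> 1 \<longrightarrow> q ^ m \<noteq> 1"
  shows "fpoly [n, k, 2] i q =
    q ^ (k + i^2 + 6 - 3 * i)
      * ((1 - q ^ (n - k + 1)) * (1 - q ^ (k - 1)) * (1 - q ^ n))
        / ((1 - q ^ (i - 1)) * (1 - q) * (1 - q ^ 2))
      * qbinom (int n + 1) (int i - 2) q * qbinom (int k) (int i - 2) q"
proof -
  have q: "qok q" using assms(4) unfolding qok_def by blast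
  have F: "fpoly [n, k, 2] i q = C2 q n k i" by (rule F2_closed[OF q assms(1,2)])
  obtain j where j: "i = j + 2" using assms(3) by (metis add.commute le_Suc_ex add_2_eq_Suc')
  have e1: "(i - 2) * (i - 1) + k + 4 = k + i^2 + 6 - 3 * i" using j by (simp add: power2_eq_square algebra_simps)
  have e2: "Suc n - k = n - k + 1" using assms(2) by simp
  have e3: "int n + 1 = int (Suc n)" "int i - 2 = int (i - 2)" using assms(3) by auto
  show ?thesis unfolding F C2_def e3 gb_qbinom[symmetric] using assms(3) e1 e2 by simp
qed


end
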